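(* Let $(V_n,\mathbf r_n)$ be a sequence of finite transitive Markov chains with $|V_n|=n$ and $t_{\mathrm{rel}}(\mathbf r_n)/t_{\mathrm{meet}}(\mathbf r_n)\to0$. Then for any sequence $t_n$ with $t_{\mathrm{rel}}(\mathbf r_n)/t_n\to0$ and $t_n/t_{\mathrm{meet}}(\mathbf r_n)\to0$, \[\lim_{n\to\infty}\frac{2t_{\mathrm{meet}}(\mathbf r_n)\alpha_{t_n}}n=1.\]
   Context: Markov chains: continuous time, irreducible, symmetric rates; transitive means for all $u,v$ there is a permutation $\phi$ with $\phi(u)=v$ and $r_{\phi(x),\phi(y)}=r_{x,y}$, and transitive chains satisfy $r(x)=\sum_yr_{x,y}=1$. $t_{\mathrm{rel}}$: inverse spectral gap. $t_{\mathrm{meet}}$: expected first meeting time of two independent walks started independently uniformly. With $\nu_x(y)=r_{x,y}/r(x)$, $\alpha_t=\mathbb P(\tau_{\mathrm{meet}}>t)$ for independent walks started at $x$ and at a $\nu_x$-distributed state (independent of $x$). *)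

theory Defs
  imports "HOL-Analysis.Analysis"
begin

text \<open>A continuous-time Markov chain on a finite state space V is given by
  its transition rates r x y (x \<noteq> y); the convention r x x = 0 is used.\<close>

definition total_rate :: "'a set \<Rightarrow> ('a \<Rightarrow> 'a \<Rightarrow> real) \<Rightarrow> 'a \<Rightarrow> real" where
  "total_rate V r x = (\<Sum>y\<in>V. r x y)"

definition irreducible_chain :: "'a set \<Rightarrow> ('a \<Rightarrow> 'a \<Rightarrow> real) \<Rightarrow> bool" where
  "irreducible_chain V r \<longleftrightarrow>
     (\<forall>x\<in>V. \<forall>y\<in>V. (x, y) \<in> {(a, b). a \<in> V \<and> b \<in> V \<and> r a b > 0}\<^sup>*)"

definition symmetric_rates :: "'a set \<Rightarrow> ('a \<Rightarrow> 'a \<Rightarrow> real) \<Rightarrow> bool" where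
  "symmetric_rates V r \<longleftrightarrow> (\<forall>x\<in>V. \<forall>y\<in>V. r x y = r y x)"

definition markov_rates :: "'a set \<Rightarrow> ('a \<Rightarrow> 'a \<Rightarrow> real) \<Rightarrow> bool" where
  "markov_rates V r \<longleftrightarrow> finite V \<and> V \<noteq> {} \<and>
     (\<forall>x\<in>V. \<forall>y\<in>V. r x y \<ge> 0) \<and> (\<forall>x\<in>V. r x x = 0)"

definition transitive_rates :: "'a set \<Rightarrow> ('a \<Rightarrow> 'a \<Rightarrow> real) \<Rightarrow> bool" where
  "transitive_rates V r \<longleftrightarrow>
     (\<forall>u\<in>V. \<forall>v\<in>V. \<exists>\<phi>. bij_betw \<phi> V V \<and> \<phi> u = v \<and>
        (\<forall>x\<in>V. \<forall>y\<in>V. r (\<phi> x) (\<phi> y) = r x y))"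

definition transitive_chain :: "'a set \<Rightarrow> ('a \<Rightarrow> 'a \<Rightarrow> real) \<Rightarrow> bool" where
  "transitive_chain V r \<longleftrightarrow> markov_rates V r \<and> irreducible_chain V r \<and>
     symmetric_rates V r \<and> transitive_rates V r \<and> (\<forall>x\<in>V. total_rate V r x = 1)"

definition generator :: "'a set \<Rightarrow> ('a \<Rightarrow> 'a \<Rightarrow> real) \<Rightarrow> ('a \<Rightarrow> real) \<Rightarrow> 'a \<Rightarrow> real" where
  "generator V r f x = (\<Sum>y\<in>V. r x y * (f y - f x))"

definition gen_matrix :: "'a set \<Rightarrow> ('a \<Rightarrow> 'a \<Rightarrow> real) \<Rightarrow> 'a \<Rightarrow> 'a \<Rightarrow> real" where
  "gen_matrix V r x y = (if x = y then - (\<Sum>z\<in>V - {x}. r x z) else r x y)"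

definition spectral_gap :: "'a set \<Rightarrow> ('a \<Rightarrow> 'a \<Rightarrow> real) \<Rightarrow> real" where
  "spectral_gap V r = Inf {mu. mu > 0 \<and> (\<exists>f. (\<exists>x\<in>V. f x \<noteq> 0) \<and>
       (\<forall>x\<in>V. - generator V r f x = mu * f x))}"

definition t_rel :: "'a set \<Rightarrow> ('a \<Rightarrow> 'a \<Rightarrow> real) \<Rightarrow> real" where
  "t_rel V r = 1 / spectral_gap V r"

fun mat_pow :: "'b set \<Rightarrow> ('b \<Rightarrow> 'b \<Rightarrow> real) \<Rightarrow> nat \<Rightarrow> 'b \<Rightarrow> 'b \<Rightarrow> real" where
  "mat_pow S A 0 = (\<lambda>i j. if i = j then 1 else 0)"
| "mat_pow S A (Suc k) = (\<lambda>i j. \<Sum>l\<in>S. mat_pow S A k i l * A l j)"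

definition mat_exp :: "'b set \<Rightarrow> ('b \<Rightarrow> 'b \<Rightarrow> real) \<Rightarrow> real \<Rightarrow> 'b \<Rightarrow> 'b \<Rightarrow> real" where
  "mat_exp S A t i j = (\<Sum>k. (t ^ k / fact k) * mat_pow S A k i j)"

text \<open>Two independent copies of the chain, killed when they meet: sub-generator of the
  product chain restricted to off-diagonal pairs.\<close>
definition offdiag :: "'a set \<Rightarrow> ('a \<times> 'a) set" where
  "offdiag V = {(x, y). x \<in> V \<and> y \<in> V \<and> x \<noteq> y}"

definition killed_gen :: "'a set \<Rightarrow> ('a \<Rightarrow> 'a \<Rightarrow> real) \<Rightarrow> 'a \<times> 'a \<Rightarrow> 'a \<times> 'a \<Rightarrow> real" where
  "killed_gen V r p q =
     gen_matrix V r (fst p) (fst q) * (if snd p = snd q then 1 else 0)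
   + (if fst p = fst q then 1 else 0) * gen_matrix V r (snd p) (snd q)"

text \<open>P(tau_meet > t) for independent walks started at x and y.\<close>
definition meet_survival :: "'a set \<Rightarrow> ('a \<Rightarrow> 'a \<Rightarrow> real) \<Rightarrow> real \<Rightarrow> 'a \<Rightarrow> 'a \<Rightarrow> real" where
  "meet_survival V r t x y =
     (if x = y then 0 else (\<Sum>q\<in>offdiag V. mat_exp (offdiag V) (killed_gen V r) t (x, y) q))"

text \<open>Expected meeting time from independent uniform starts: E[tau] = int_0^inf P(tau > t) dt.\<close>
definition t_meet :: "'a set \<Rightarrow> ('a \<Rightarrow> 'a \<Rightarrow> real) \<Rightarrow> real" where
  "t_meet V r = (1 / real (card V) ^ 2) *
     (\<Sum>x\<in>V. \<Sum>y\<in>V. integral {0..} (\<lambda>t. meet_survival V r t x y))"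

text \<open>alpha_t: start at x and at a nu_x-distributed neighbour, nu_x(y) = r x y / r(x);
  averaged over uniform x (for transitive chains this does not depend on x).\<close>
definition alpha :: "'a set \<Rightarrow> ('a \<Rightarrow> 'a \<Rightarrow> real) \<Rightarrow> real \<Rightarrow> real" where
  "alpha V r t = (1 / real (card V)) *
     (\<Sum>x\<in>V. \<Sum>y\<in>V. (r x y / total_rate V r x) * meet_survival V r t x y)"

end

theory Submission
  imports Defs
begin

definition ip :: "'a set \<Rightarrow> ('a \<Rightarrow> real) \<Rightarrow> ('a \<Rightarrow> real) \<Rightarrow> real" where
  "ip S u v = (\<Sum>i\<in>S. u i * v i)"
definition mv :: "'a set \<Rightarrow> ('a \<Rightarrow> 'a \<Rightarrow> real) \<Rightarrow> ('a \<Rightarrow> real) \<Rightarrow> 'a \<Rightarrow> real" where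
  "mv S A u = (\<lambda>i. \<Sum>j\<in>S. A i j * u j)"
definition orthonormal :: "'a set \<Rightarrow> nat \<Rightarrow> (nat \<Rightarrow> 'a \<Rightarrow> real) \<Rightarrow> bool" where
  "orthonormal S K \<phi> \<longleftrightarrow> (\<forall>j<K. \<forall>k<K. ip S (\<phi> j) (\<phi> k) = (if j = k then 1 else 0))"
definition eigfam :: "'a set \<Rightarrow> ('a \<Rightarrow> 'a \<Rightarrow> real) \<Rightarrow> nat \<Rightarrow> (nat \<Rightarrow> 'a \<Rightarrow> real) \<Rightarrow> (nat \<Rightarrow> real) \<Rightarrow> bool" where
  "eigfam S A K \<phi> \<mu> \<longleftrightarrow> (\<forall>k<K. \<forall>i\<in>S. mv S A (\<phi> k) i = \<mu> k * \<phi> k i)"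
definition complete_fam :: "'a set \<Rightarrow> nat \<Rightarrow> (nat \<Rightarrow> 'a \<Rightarrow> real) \<Rightarrow> bool" where
  "complete_fam S K \<phi> \<longleftrightarrow> (\<forall>u. (\<forall>k<K. ip S u (\<phi> k) = 0) \<longrightarrow> (\<forall>i\<in>S. u i = 0))"
definition symm :: "'a set \<Rightarrow> ('a \<Rightarrow> 'a \<Rightarrow> real) \<Rightarrow> bool" where
  "symm S A \<longleftrightarrow> (\<forall>i\<in>S. \<forall>j\<in>S. A i j = A j i)"

lemma ip_comm: "ip S u v = ip S v u"
  unfolding ip_def by (simp add: mult.commute)

lemma ip_cong: "(\<And>i. i \<in> S \<Longrightarrow> u i = u' i) \<Longrightarrow> (\<And>i. i \<in> S \<Longrightarrow> v i = v' i) \<Longrightarrow> ip S u v = ip S u' v'"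
  unfolding ip_def by simp

lemma ip_sum_left: "ip S (\<lambda>i. \<Sum>k\<in>F. f k i) v = (\<Sum>k\<in>F. ip S (f k) v)"
  unfolding ip_def by (simp add: sum_distrib_right sum.swap[of _ S])

lemma ip_sum_right: "ip S v (\<lambda>i. \<Sum>k\<in>F. f k i) = (\<Sum>k\<in>F. ip S v (f k))"
  using ip_sum_left[where S=S and F=F and f=f and v=v] by (simp add: ip_comm)

lemma ip_scale_left: "ip S (\<lambda>i. c * u i) v = c * ip S u v"
  unfolding ip_def by (simp add: sum_distrib_left mult.assoc)

lemma ip_scale_right: "ip S v (\<lambda>i. c * u i) = c * ip S v u"
  unfolding ip_def by (simp add: sum_distrib_left mult.left_commute)

lemma ip_add_left: "ip S (\<lambda>i. u i + w i) v = ip S u v + ip S w v"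
  unfolding ip_def by (simp add: distrib_right sum.distrib)

lemma ip_diff_left: "ip S (\<lambda>i. u i - w i) v = ip S u v - ip S w v"
  unfolding ip_def by (simp add: left_diff_distrib sum_subtractf)

lemma ip_add_right: "ip S v (\<lambda>i. u i + w i) = ip S v u + ip S v w"
  unfolding ip_def by (simp add: distrib_left sum.distrib)

lemma ip_diff_right: "ip S v (\<lambda>i. u i - w i) = ip S v u - ip S v w"
  unfolding ip_def by (simp add: right_diff_distrib sum_subtractf)

lemma ip_self_nonneg: "ip S u u \<ge> 0"
  unfolding ip_def by (simp add: sum_nonneg)

lemma ip_self_zero: "finite S \<Longrightarrow> ip S u u = 0 \<Longrightarrow> i \<in> S \<Longrightarrow> u i = 0"
  unfolding ip_def using sum_nonneg_eq_0_iff[of S "\<lambda>i. u i * u i"] by simp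

lemma ip_delta: assumes "finite S" "i \<in> S" shows "ip S (\<lambda>j. if j = i then 1 else 0) v = v i"
proof -
  have "(\<Sum>j\<in>S. (if j = i then 1 else 0) * v j) = (\<Sum>j\<in>S. if j = i then v j else 0)"
    by (rule sum.cong) auto
  also have "\<dots> = v i" using assms by simp
  finally show ?thesis unfolding ip_def .
qed

lemma mv_symm: "symm S A \<Longrightarrow> ip S u (mv S A v) = ip S (mv S A u) v"
proof -
  assume s: "symm S A"
  have "ip S u (mv S A v) = (\<Sum>i\<in>S. \<Sum>j\<in>S. u i * A i j * v j)"
    unfolding ip_def mv_def by (simp add: sum_distrib_left mult.assoc)
  also have "\<dots> = (\<Sum>j\<in>S. \<Sum>i\<in>S. u i * A i j * v j)" by (rule sum.swap)
  also have "\<dots> = (\<Sum>j\<in>S. \<Sum>i\<in>S. A j i * u i * v j)"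
    using s unfolding symm_def by (intro sum.cong refl) (simp add: mult.commute)
  also have "\<dots> = ip S (mv S A u) v"
    unfolding ip_def mv_def by (simp add: sum_distrib_right)
  finally show ?thesis .
qed

lemma orth_comb:
  assumes "orthonormal S K \<phi>" "j < K"
  shows "ip S (\<lambda>i. \<Sum>k<K. c k * \<phi> k i) (\<phi> j) = c j"
proof -
  have "ip S (\<lambda>i. \<Sum>k<K. c k * \<phi> k i) (\<phi> j) = (\<Sum>k<K. c k * ip S (\<phi> k) (\<phi> j))"
    by (simp add: ip_sum_left ip_scale_left)
  also have "\<dots> = (\<Sum>k<K. c k * (if k = j then 1 else 0))"
    using assms unfolding orthonormal_def by (intro sum.cong) auto
  also have "\<dots> = c j" using assms(2) by (simp add: if_distrib cong: if_cong)
  finally show ?thesis .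
qed

lemma resid_orth:
  assumes "orthonormal S K \<phi>" "j < K"
  shows "ip S (\<lambda>i. u i - (\<Sum>k<K. ip S u (\<phi> k) * \<phi> k i)) (\<phi> j) = 0"
  using orth_comb[OF assms, of "\<lambda>k. ip S u (\<phi> k)"] by (simp add: ip_diff_left)

lemma bessel:
  assumes "orthonormal S K \<phi>"
  shows "(\<Sum>k<K. (ip S u (\<phi> k))\<^sup>2) \<le> ip S u u"
proof -
  define c where "c k = ip S u (\<phi> k)" for k
  define s where "s i = (\<Sum>k<K. c k * \<phi> k i)" for i
  define w where "w i = u i - s i" for i
  have wphi: "ip S w (\<phi> j) = 0" if "j < K" for j
    using resid_orth[OF assms that, of u] unfolding w_def s_def c_def by simp
  have "ip S s w = (\<Sum>k<K. c k * ip S (\<phi> k) w)"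
    unfolding s_def by (simp add: ip_sum_left ip_scale_left)
  also have "\<dots> = 0" using wphi by (simp add: ip_comm)
  finally have sw: "ip S s w = 0" .
  have us: "ip S u s = (\<Sum>k<K. (c k)\<^sup>2)"
    unfolding s_def by (simp add: ip_sum_right ip_scale_right c_def power2_eq_square)
  have "ip S w w = ip S u w - ip S s w"
    unfolding w_def by (simp add: ip_diff_left)
  also have "\<dots> = ip S u u - (\<Sum>k<K. (c k)\<^sup>2)"
    using sw us unfolding w_def by (simp add: ip_diff_right)
  finally show ?thesis using ip_self_nonneg[of S w] unfolding c_def by simp
qed

lemma card_bound:
  assumes "finite S" "orthonormal S K \<phi>"
  shows "K \<le> card S"
proof -
  have b: "(\<Sum>k<K. (\<phi> k i)\<^sup>2) \<le> 1" if "i \<in> S" for i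
  proof -
    have "(\<Sum>k<K. (ip S (\<lambda>j. if j = i then 1 else 0) (\<phi> k))\<^sup>2) \<le> ip S (\<lambda>j. if j = i then 1 else 0) (\<lambda>j. if j = i then 1 else 0)"
      by (rule bessel[OF assms(2)])
    then show ?thesis using ip_delta[OF assms(1) that] by simp
  qed
  have "(\<Sum>i\<in>S. \<Sum>k<K. (\<phi> k i)\<^sup>2) \<le> (\<Sum>i\<in>S. 1)"
    by (rule sum_mono) (use b in auto)
  moreover have "(\<Sum>i\<in>S. \<Sum>k<K. (\<phi> k i)\<^sup>2) = (\<Sum>k<K. ip S (\<phi> k) (\<phi> k))"
    unfolding ip_def by (subst sum.swap) (simp add: power2_eq_square)
  moreover have "(\<Sum>k<K. ip S (\<phi> k) (\<phi> k)) = real K"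
    using assms(2) unfolding orthonormal_def by simp
  ultimately show ?thesis by simp
qed


lemma subseq_conv:
  fixes x :: "nat \<Rightarrow> 'a \<Rightarrow> real"
  assumes "finite S" "\<forall>n. \<forall>i\<in>S. \<bar>x n i\<bar> \<le> B"
  shows "\<exists>\<sigma>. strict_mono \<sigma> \<and> (\<forall>i\<in>S. convergent (\<lambda>n. x (\<sigma> n) i))"
  using assms
proof (induction S rule: finite_induct)
  case empty
  then show ?case by (intro exI[of _ id]) (auto simp: strict_mono_def)
next
  case (insert a F)
  then obtain \<sigma> where \<sigma>: "strict_mono \<sigma>" "\<forall>i\<in>F. convergent (\<lambda>n. x (\<sigma> n) i)" by auto
  obtain f where f: "strict_mono f" "monoseq (\<lambda>n. x (\<sigma> (f n)) a)"
    using seq_monosub[of "\<lambda>n. x (\<sigma> n) a"] by auto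
  have "Bseq (\<lambda>n. x (\<sigma> (f n)) a)"
    using insert.prems by (intro BseqI'[of _ B]) auto
  then have ca: "convergent (\<lambda>n. x (\<sigma> (f n)) a)"
    using f(2) Bseq_monoseq_convergent by blast
  have "convergent (\<lambda>n. x (\<sigma> (f n)) i)" if "i \<in> F" for i
  proof -
    from \<sigma>(2) that obtain L where "(\<lambda>n. x (\<sigma> n) i) \<longlonglongrightarrow> L" by (auto simp: convergent_def)
    from LIMSEQ_subseq_LIMSEQ[OF this f(1)] show ?thesis by (auto simp: convergent_def o_def)
  qed
  moreover have "strict_mono (\<sigma> \<circ> f)" using \<sigma>(1) f(1) by (simp add: strict_mono_def)
  ultimately show ?case using ca by (intro exI[of _ "\<sigma> \<circ> f"]) (auto simp: o_def)
qed

lemma quad_lemma: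
  fixes a b :: real
  assumes "\<forall>e. 2 * e * a + e\<^sup>2 * b \<ge> 0"
  shows "a = 0"
proof (rule ccontr)
  assume a: "a \<noteq> 0"
  define d where "d = 1 / (\<bar>b\<bar> + 1)"
  have d: "d > 0" "d * \<bar>b\<bar> < 1" unfolding d_def by (auto simp: field_simps)
  have "2 * (-a * d) * a + (-a * d)\<^sup>2 * b \<ge> 0" using assms by blast
  then have "a\<^sup>2 * d * (d * b - 2) \<ge> 0" by (simp add: power2_eq_square algebra_simps)
  moreover have "d * b - 2 < 0" using d abs_ge_self[of b] 
    by (smt (verit, ccfv_SIG) mult_left_mono)
  moreover have "a\<^sup>2 * d > 0" using a d by simp
  ultimately show False using mult_pos_neg[of "a\<^sup>2 * d" "d * b - 2"] by linarith
qed

lemma mv_lin: "mv S A (\<lambda>i. v i + e * w i) = (\<lambda>i. mv S A v i + e * mv S A w i)"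
  unfolding mv_def by (auto simp: sum.distrib sum_distrib_left algebra_simps)

lemma mv_scale: "mv S A (\<lambda>i. c * u i) = (\<lambda>i. c * mv S A u i)"
  unfolding mv_def by (auto simp: sum_distrib_left algebra_simps)

lemma quadform_lin:
  assumes "symm S A"
  shows "ip S (\<lambda>i. v i + e * w i) (mv S A (\<lambda>i. v i + e * w i))
     = ip S v (mv S A v) + 2 * e * ip S w (mv S A v) + e\<^sup>2 * ip S w (mv S A w)"
proof -
  have "ip S v (mv S A w) = ip S w (mv S A v)"
    using mv_symm[OF assms, of v w] by (simp add: ip_comm)
  then show ?thesis
    by (simp add: mv_lin ip_add_left ip_add_right ip_scale_left ip_scale_right power2_eq_square algebra_simps)
qed

lemma exists_eig:
  assumes fin: "finite S" and sy: "symm S A" and orth: "orthonormal S K \<phi>"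
    and eig: "eigfam S A K \<phi> \<mu>" and nc: "\<not> complete_fam S K \<phi>"
  shows "\<exists>v m. ip S v v = 1 \<and> (\<forall>k<K. ip S v (\<phi> k) = 0) \<and> (\<forall>i\<in>S. mv S A v i = m * v i)"
proof -
  define C where "C = {u. ip S u u = 1 \<and> (\<forall>k<K. ip S u (\<phi> k) = 0)}"
  define q where "q u = ip S u (mv S A u)" for u
  from nc obtain u0 i0 where u0: "\<forall>k<K. ip S u0 (\<phi> k) = 0" "i0 \<in> S" "u0 i0 \<noteq> 0"
    unfolding complete_fam_def by auto
  have pos: "ip S u0 u0 > 0"
    using ip_self_nonneg[of S u0] ip_self_zero[OF fin, of u0 i0] u0 by linarith
  define u1 where "u1 i = (1 / sqrt (ip S u0 u0)) * u0 i" for i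
  have "ip S u1 u1 = (1 / sqrt (ip S u0 u0))\<^sup>2 * ip S u0 u0"
    unfolding u1_def ip_scale_left ip_scale_right by (simp add: power2_eq_square)
  also have "\<dots> = 1" using pos by (simp add: power_divide)
  moreover have "ip S u1 (\<phi> k) = 0" if "k < K" for k
    using u0(1) that unfolding u1_def ip_scale_left by simp
  ultimately have "u1 \<in> C" unfolding C_def by simp
  then have Cne: "C \<noteq> {}" by auto
  have bnd: "\<bar>u i\<bar> \<le> 1" if "u \<in> C" "i \<in> S" for u i
  proof -
    have "(u i)\<^sup>2 \<le> ip S u u" unfolding ip_def
      using member_le_sum[of i S "\<lambda>i. u i * u i"] fin that(2) by (simp add: power2_eq_square)
    then have "(u i)\<^sup>2 \<le> 1" using that(1) unfolding C_def by simp
    then show ?thesis by (simp add: abs_square_le_1)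
  qed
  define B where "B = (\<Sum>i\<in>S. \<Sum>j\<in>S. \<bar>A i j\<bar>)"
  have qb: "q u \<ge> - B" if "u \<in> C" for u
  proof -
    have "\<bar>q u\<bar> = \<bar>\<Sum>i\<in>S. \<Sum>j\<in>S. u i * A i j * u j\<bar>"
      unfolding q_def ip_def mv_def by (simp add: sum_distrib_left mult.assoc)
    also have "\<dots> \<le> (\<Sum>i\<in>S. \<Sum>j\<in>S. \<bar>u i * A i j * u j\<bar>)"
      by (rule order_trans[OF sum_abs sum_mono]) (rule sum_abs)
    also have "\<dots> \<le> B" unfolding B_def
    proof (intro sum_mono)
      fix i j assume ij: "i \<in> S" "j \<in> S"
      have "\<bar>u i\<bar> * \<bar>u j\<bar> \<le> 1" using bnd[OF that ij(1)] bnd[OF that ij(2)]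
        by (simp add: mult_le_one)
      then have "\<bar>u i\<bar> * \<bar>u j\<bar> * \<bar>A i j\<bar> \<le> \<bar>A i j\<bar>"
        using mult_right_mono[of _ 1 "\<bar>A i j\<bar>"] by simp
      then show "\<bar>u i * A i j * u j\<bar> \<le> \<bar>A i j\<bar>" by (simp add: abs_mult algebra_simps)
    qed
    finally show ?thesis by linarith
  qed
  have bdd: "bdd_below (q ` C)" using qb by (intro bdd_belowI[of _ "-B"]) auto
  define m where "m = Inf (q ` C)"
  have m_le: "m \<le> q u" if "u \<in> C" for u
    unfolding m_def using bdd that by (simp add: cInf_lower)
  have "\<exists>u\<in>C. q u < m + inverse (real (Suc N))" for N
  proof -
    have "Inf (q ` C) < m + inverse (real (Suc N))" unfolding m_def by simp
    then show ?thesis using cInf_less_iff[of "q ` C"] Cne bdd by auto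
  qed
  then obtain x where x: "\<And>N. x N \<in> C" "\<And>N. q (x N) < m + inverse (real (Suc N))"
    by metis
  obtain \<sigma> where \<sigma>: "strict_mono \<sigma>" "\<forall>i\<in>S. convergent (\<lambda>n. x (\<sigma> n) i)"
    using subseq_conv[OF fin, of x 1] bnd x(1) by blast
  define v where "v i = lim (\<lambda>n. x (\<sigma> n) i)" for i
  have lv: "(\<lambda>n. x (\<sigma> n) i) \<longlonglongrightarrow> v i" if "i \<in> S" for i
    using \<sigma>(2) that unfolding v_def by (simp add: convergent_LIMSEQ_iff)
  have "(\<lambda>n. ip S (x (\<sigma> n)) (x (\<sigma> n))) \<longlonglongrightarrow> ip S v v"
    unfolding ip_def by (intro tendsto_sum tendsto_mult lv)
  moreover have "(\<lambda>n. ip S (x (\<sigma> n)) (x (\<sigma> n))) = (\<lambda>n. 1)" using x(1) unfolding C_def by auto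
  ultimately have vv: "ip S v v = 1" using LIMSEQ_unique tendsto_const by metis
  have vphi: "ip S v (\<phi> k) = 0" if "k < K" for k
  proof -
    have "(\<lambda>n. ip S (x (\<sigma> n)) (\<phi> k)) \<longlonglongrightarrow> ip S v (\<phi> k)"
      unfolding ip_def by (intro tendsto_sum tendsto_mult lv tendsto_const)
    moreover have "(\<lambda>n. ip S (x (\<sigma> n)) (\<phi> k)) = (\<lambda>n. 0)" using x(1) that unfolding C_def by auto
    ultimately show ?thesis using LIMSEQ_unique tendsto_const by metis
  qed
  have vC: "v \<in> C" using vv vphi unfolding C_def by auto
  have "(\<lambda>n. q (x (\<sigma> n))) \<longlonglongrightarrow> q v"
    unfolding q_def ip_def mv_def by (intro tendsto_sum tendsto_mult lv tendsto_const)
  moreover have "(\<lambda>n. q (x (\<sigma> n))) \<longlonglongrightarrow> m"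
  proof (rule tendsto_sandwich[of "\<lambda>n. m" _ _ "\<lambda>n. m + inverse (real (Suc n))"])
    show "\<forall>\<^sub>F n in sequentially. m \<le> q (x (\<sigma> n))" using m_le x(1) by auto
    have "q (x (\<sigma> n)) \<le> m + inverse (real (Suc n))" for n
    proof -
      have "n \<le> \<sigma> n" using seq_suble[OF \<sigma>(1)] by simp
      then have "inverse (real (Suc (\<sigma> n))) \<le> inverse (real (Suc n))"
        by (simp add: le_imp_inverse_le)
      then show ?thesis using x(2)[of "\<sigma> n"] by linarith
    qed
    then show "\<forall>\<^sub>F n in sequentially. q (x (\<sigma> n)) \<le> m + inverse (real (Suc n))" by auto
    show "(\<lambda>n. m) \<longlonglongrightarrow> m" by simp
    show "(\<lambda>n. m + inverse (real (Suc n))) \<longlonglongrightarrow> m"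
      using tendsto_add[OF tendsto_const[of m] LIMSEQ_inverse_real_of_nat] by simp
  qed
  ultimately have qv: "q v = m" using LIMSEQ_unique by blast
  have var: "ip S w (mv S A v) = 0" if w: "\<forall>k<K. ip S w (\<phi> k) = 0" "ip S w v = 0" for w
  proof -
    have "2 * e * ip S w (mv S A v) + e\<^sup>2 * (q w - m * ip S w w) \<ge> 0" for e
    proof -
      define u where "u i = v i + e * w i" for i
      have uu: "ip S u u = 1 + e\<^sup>2 * ip S w w"
        unfolding u_def using vv w(2)
        by (simp add: ip_add_left ip_add_right ip_scale_left ip_scale_right ip_comm[of S v w] power2_eq_square)
      have uupos: "ip S u u > 0" using uu ip_self_nonneg[of S w]
        by (smt (verit) zero_le_power2 mult_nonneg_nonneg)
      have uphi: "ip S u (\<phi> k) = 0" if "k < K" for k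
        unfolding u_def using vphi[OF that] w(1) that by (simp add: ip_add_left ip_scale_left)
      define u' where "u' i = (1 / sqrt (ip S u u)) * u i" for i
      have "ip S u' u' = (1 / sqrt (ip S u u))\<^sup>2 * ip S u u"
        unfolding u'_def ip_scale_left ip_scale_right by (simp add: power2_eq_square)
      also have "\<dots> = 1" using uupos by (simp add: power_divide)
      moreover have "ip S u' (\<phi> k) = 0" if "k < K" for k
        using uphi that unfolding u'_def ip_scale_left by simp
      ultimately have "u' \<in> C" unfolding C_def by simp
      then have "m \<le> q u'" by (rule m_le)
      also have "q u' = (1 / sqrt (ip S u u))\<^sup>2 * q u"
        unfolding q_def u'_def mv_scale ip_scale_left ip_scale_right by (simp add: power2_eq_square)
      also have "\<dots> = q u / ip S u u" using uupos by (simp add: power_divide)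
      finally have "m * ip S u u \<le> q u" using uupos by (simp add: field_simps)
      moreover have "q u = q v + 2 * e * ip S w (mv S A v) + e\<^sup>2 * q w"
        unfolding q_def u_def by (rule quadform_lin[OF sy])
      ultimately show ?thesis using qv uu by (simp add: algebra_simps)
    qed
    then show ?thesis using quad_lemma by blast
  qed
  define w where "w i = mv S A v i - m * v i" for i
  have wphi: "\<forall>k<K. ip S w (\<phi> k) = 0"
  proof (intro allI impI)
    fix k assume k: "k < K"
    have "ip S (mv S A v) (\<phi> k) = ip S v (mv S A (\<phi> k))" using mv_symm[OF sy] by simp
    also have "\<dots> = ip S v (\<lambda>i. \<mu> k * \<phi> k i)"
      using eig k unfolding eigfam_def by (intro ip_cong) auto
    also have "\<dots> = 0" using vphi[OF k] by (simp add: ip_scale_right)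
    finally show "ip S w (\<phi> k) = 0" unfolding w_def using vphi[OF k]
      by (simp add: ip_diff_left ip_scale_left)
  qed
  have wv: "ip S w v = 0"
    unfolding w_def using qv vv unfolding q_def by (simp add: ip_diff_left ip_scale_left ip_comm)
  have wA: "ip S w (mv S A v) = 0" using var[OF wphi wv] .
  have "ip S w w = ip S w (mv S A v) - m * ip S w v"
    unfolding w_def by (simp add: ip_diff_right ip_scale_right)
  then have "ip S w w = 0" using wA wv by simp
  then have "\<forall>i\<in>S. mv S A v i = m * v i" using ip_self_zero[OF fin] unfolding w_def by fastforce
  then show ?thesis using vv vphi by blast
qed

lemma spectral:
  assumes fin: "finite S" and sy: "symm S A"
  shows "\<exists>K \<phi> \<mu>. orthonormal S K \<phi> \<and> eigfam S A K \<phi> \<mu> \<and> complete_fam S K \<phi>"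
proof -
  have step: "(\<exists>\<phi> \<mu>. orthonormal S k \<phi> \<and> eigfam S A k \<phi> \<mu>) \<or>
     (\<exists>K \<phi> \<mu>. orthonormal S K \<phi> \<and> eigfam S A K \<phi> \<mu> \<and> complete_fam S K \<phi>)" for k
  proof (induction k)
    case 0
    then show ?case by (simp add: orthonormal_def eigfam_def)
  next
    case (Suc k)
    show ?case
    proof (cases "\<exists>K \<phi> \<mu>. orthonormal S K \<phi> \<and> eigfam S A K \<phi> \<mu> \<and> complete_fam S K \<phi>")
      case True then show ?thesis by blast
    next
      case False
      with Suc obtain \<phi> \<mu> where o: "orthonormal S k \<phi>" and e: "eigfam S A k \<phi> \<mu>" by blast
      with False have nc: "\<not> complete_fam S k \<phi>" by blast
      obtain v m where v: "ip S v v = 1" "\<forall>j<k. ip S v (\<phi> j) = 0" "\<forall>i\<in>S. mv S A v i = m * v i"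
        using exists_eig[OF fin sy o e nc] by blast
      have v': "\<forall>j<k. ip S (\<phi> j) v = 0" using v(2) ip_comm by metis
      have "orthonormal S (Suc k) (\<phi>(k := v))"
        unfolding orthonormal_def
      proof (intro allI impI)
        fix j l assume jl: "j < Suc k" "l < Suc k"
        show "ip S ((\<phi>(k := v)) j) ((\<phi>(k := v)) l) = (if j = l then 1 else 0)"
          using o v v' jl unfolding orthonormal_def
          by (cases "j = k"; cases "l = k") auto
      qed
      moreover have "eigfam S A (Suc k) (\<phi>(k := v)) (\<mu>(k := m))"
        using e v unfolding eigfam_def by (auto simp: less_Suc_eq)
      ultimately show ?thesis by blast
    qed
  qed
  from step[of "Suc (card S)"] card_bound[OF fin] show ?thesis by fastforce
qed

locale spec =
  fixes S :: "'a set" and A :: "'a \<Rightarrow> 'a \<Rightarrow> real" and K :: nat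
    and \<phi> :: "nat \<Rightarrow> 'a \<Rightarrow> real" and \<mu> :: "nat \<Rightarrow> real"
  assumes fin: "finite S" and sy: "symm S A" and orth: "orthonormal S K \<phi>"
    and eig: "eigfam S A K \<phi> \<mu>" and compl: "complete_fam S K \<phi>"
begin

lemma expand: "i \<in> S \<Longrightarrow> u i = (\<Sum>k<K. ip S u (\<phi> k) * \<phi> k i)"
  using compl resid_orth[OF orth, of _ u] unfolding complete_fam_def by fastforce

lemma compl_mat: "i \<in> S \<Longrightarrow> j \<in> S \<Longrightarrow> (\<Sum>k<K. \<phi> k i * \<phi> k j) = (if i = j then 1 else 0)"
  using expand[of j "\<lambda>j. if j = i then 1 else 0"] ip_delta[OF fin] by (auto simp: eq_commute)

lemma parseval: "ip S u v = (\<Sum>k<K. ip S u (\<phi> k) * ip S v (\<phi> k))"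
proof -
  have "ip S u v = ip S u (\<lambda>i. \<Sum>k<K. ip S v (\<phi> k) * \<phi> k i)"
    using expand by (intro ip_cong) auto
  also have "\<dots> = (\<Sum>k<K. ip S v (\<phi> k) * ip S u (\<phi> k))"
    by (simp add: ip_sum_right ip_scale_right)
  finally show ?thesis by (simp add: mult.commute)
qed

lemma eig_at: "k < K \<Longrightarrow> i \<in> S \<Longrightarrow> mv S A (\<phi> k) i = \<mu> k * \<phi> k i"
  using eig unfolding eigfam_def by auto

lemma ip_mv_phi: "k < K \<Longrightarrow> ip S (mv S A u) (\<phi> k) = \<mu> k * ip S u (\<phi> k)"
proof -
  assume k: "k < K"
  have "ip S (mv S A u) (\<phi> k) = ip S u (mv S A (\<phi> k))" using mv_symm[OF sy] by simp
  also have "\<dots> = ip S u (\<lambda>i. \<mu> k * \<phi> k i)" using eig_at[OF k] by (intro ip_cong) auto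
  finally show ?thesis by (simp add: ip_scale_right)
qed

lemma quad: "ip S u (mv S A u) = (\<Sum>k<K. \<mu> k * (ip S u (\<phi> k))\<^sup>2)"
  using parseval[of u "mv S A u"] ip_mv_phi by (simp add: power2_eq_square mult_ac)

lemma mu_eq: "k < K \<Longrightarrow> \<mu> k = ip S (\<phi> k) (mv S A (\<phi> k))"
proof -
  assume k: "k < K"
  have "ip S (\<phi> k) (mv S A (\<phi> k)) = ip S (\<phi> k) (\<lambda>i. \<mu> k * \<phi> k i)"
    using eig_at[OF k] by (intro ip_cong) auto
  then show ?thesis using orth k unfolding orthonormal_def by (simp add: ip_scale_right)
qed

lemma mat_pow_eq: "i \<in> S \<Longrightarrow> j \<in> S \<Longrightarrow> mat_pow S A m i j = (\<Sum>k<K. \<mu> k ^ m * \<phi> k i * \<phi> k j)"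
proof (induction m arbitrary: j)
  case 0
  then show ?case using compl_mat by simp
next
  case (Suc m)
  have "mat_pow S A (Suc m) i j = (\<Sum>l\<in>S. (\<Sum>k<K. \<mu> k ^ m * \<phi> k i * \<phi> k l) * A l j)"
    using Suc by simp
  also have "\<dots> = (\<Sum>l\<in>S. \<Sum>k<K. \<mu> k ^ m * \<phi> k i * (A j l * \<phi> k l))"
    using sy Suc.prems unfolding symm_def
    by (intro sum.cong refl) (simp add: sum_distrib_right sum_distrib_left mult_ac)
  also have "\<dots> = (\<Sum>k<K. \<Sum>l\<in>S. \<mu> k ^ m * \<phi> k i * (A j l * \<phi> k l))"
    by (rule sum.swap)
  also have "\<dots> = (\<Sum>k<K. \<mu> k ^ m * \<phi> k i * (\<Sum>l\<in>S. A j l * \<phi> k l))"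
    by (simp add: sum_distrib_left)
  also have "\<dots> = (\<Sum>k<K. \<mu> k ^ m * \<phi> k i * (\<mu> k * \<phi> k j))"
    using eig_at Suc.prems unfolding mv_def by (intro sum.cong) auto
  finally show ?case by (simp add: mult_ac)
qed

lemma mat_exp_eq: "i \<in> S \<Longrightarrow> j \<in> S \<Longrightarrow> mat_exp S A t i j = (\<Sum>k<K. exp (\<mu> k * t) * \<phi> k i * \<phi> k j)"
proof -
  assume ij: "i \<in> S" "j \<in> S"
  have "(\<lambda>n. (\<mu> k * t) ^ n / fact n) sums exp (\<mu> k * t)" for k
    using exp_converges[of "\<mu> k * t"] by (simp add: scaleR_conv_of_real divide_inverse mult.commute)
  then have "(\<lambda>n. (\<mu> k * t) ^ n / fact n * (\<phi> k i * \<phi> k j)) sums (exp (\<mu> k * t) * (\<phi> k i * \<phi> k j))" for k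
    by (rule sums_mult2)
  then have "(\<lambda>n. \<Sum>k<K. (\<mu> k * t) ^ n / fact n * (\<phi> k i * \<phi> k j)) sums (\<Sum>k<K. exp (\<mu> k * t) * (\<phi> k i * \<phi> k j))"
    by (rule sums_sum)
  moreover have "(\<lambda>n. \<Sum>k<K. (\<mu> k * t) ^ n / fact n * (\<phi> k i * \<phi> k j)) = (\<lambda>n. (t ^ n / fact n) * mat_pow S A n i j)"
    using mat_pow_eq[OF ij] by (simp add: sum_distrib_left power_mult_distrib mult_ac)
  ultimately show ?thesis unfolding mat_exp_def by (simp add: sums_iff mult_ac)
qed

end


lemma sum_sq_shift:
  fixes f :: "'a \<Rightarrow> real"
  assumes "finite V"
  shows "(\<Sum>i\<in>V. (f i - c)\<^sup>2) = (\<Sum>i\<in>V. (f i)\<^sup>2) - 2 * c * (\<Sum>i\<in>V. f i) + real (card V) * c\<^sup>2"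
proof -
  have "(\<Sum>i\<in>V. (f i - c)\<^sup>2) = (\<Sum>i\<in>V. (f i)\<^sup>2 - 2 * c * f i + c\<^sup>2)"
    by (intro sum.cong) (auto simp: power2_eq_square algebra_simps)
  also have "\<dots> = (\<Sum>i\<in>V. (f i)\<^sup>2) - 2 * c * (\<Sum>i\<in>V. f i) + real (card V) * c\<^sup>2"
    by (simp add: sum.distrib sum_subtractf sum_distrib_left)
  finally show ?thesis .
qed

lemma cs_sum:
  fixes f :: "'a \<Rightarrow> real"
  assumes "finite V" "V \<noteq> {}"
  shows "(\<Sum>i\<in>V. f i)\<^sup>2 / real (card V) \<le> (\<Sum>i\<in>V. (f i)\<^sup>2)"
proof -
  define N where "N = real (card V)"
  have N: "N > 0" using assms unfolding N_def by (simp add: card_gt_0_iff)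
  define s where "s = (\<Sum>i\<in>V. f i)"
  have "0 \<le> (\<Sum>i\<in>V. (f i - s / N)\<^sup>2)" by (simp add: sum_nonneg)
  also have "\<dots> = (\<Sum>i\<in>V. (f i)\<^sup>2) - 2 * (s / N) * s + N * (s / N)\<^sup>2"
    using sum_sq_shift[OF assms(1)] unfolding s_def N_def by simp
  also have "\<dots> = (\<Sum>i\<in>V. (f i)\<^sup>2) - s\<^sup>2 / N"
    using N by (simp add: power2_eq_square field_simps)
  finally show ?thesis unfolding s_def N_def by simp
qed

locale mchain =
  fixes V :: "'a set" and r :: "'a \<Rightarrow> 'a \<Rightarrow> real"
  assumes finV: "finite V" and two: "card V \<ge> 2"
    and nonneg: "\<And>x y. x \<in> V \<Longrightarrow> y \<in> V \<Longrightarrow> r x y \<ge> 0"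
    and diag0: "\<And>x. x \<in> V \<Longrightarrow> r x x = 0"
    and sym: "\<And>x y. x \<in> V \<Longrightarrow> y \<in> V \<Longrightarrow> r x y = r y x"
    and tot: "\<And>x. x \<in> V \<Longrightarrow> (\<Sum>y\<in>V. r x y) = 1"
    and irr: "irreducible_chain V r"
begin

definition AQ :: "'a \<Rightarrow> 'a \<Rightarrow> real" where
  "AQ x y = (if x = y then 1 else 0) - r x y"

definition EQ :: "('a \<Rightarrow> real) \<Rightarrow> real" where
  "EQ g = ip V g (mv V AQ g)"

lemma Vne: "V \<noteq> {}" using two by auto

lemma mvAQ: assumes x: "x \<in> V" shows "mv V AQ g x = g x - (\<Sum>y\<in>V. r x y * g y)"
proof -
  have "mv V AQ g x = (\<Sum>y\<in>V. (if x = y then g y else 0) - r x y * g y)"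
    unfolding mv_def AQ_def by (intro sum.cong refl) (simp add: left_diff_distrib)
  also have "\<dots> = (\<Sum>y\<in>V. (if x = y then g y else 0)) - (\<Sum>y\<in>V. r x y * g y)"
    by (rule sum_subtractf)
  also have "(\<Sum>y\<in>V. (if x = y then g y else 0)) = g x" using x finV by simp
  finally show ?thesis .
qed

lemma gen_eq: "x \<in> V \<Longrightarrow> - generator V r f x = mv V AQ f x"
proof -
  assume x: "x \<in> V"
  have "generator V r f x = (\<Sum>y\<in>V. r x y * f y) - (\<Sum>y\<in>V. r x y) * f x"
    unfolding generator_def by (simp add: right_diff_distrib sum_subtractf sum_distrib_right)
  then show ?thesis using tot[OF x] mvAQ[OF x] by simp
qed

lemma symAQ: "symm V AQ"
  unfolding symm_def AQ_def using sym by auto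

lemma EQ2: "2 * EQ g = (\<Sum>x\<in>V. \<Sum>y\<in>V. r x y * (g x - g y)\<^sup>2)"
proof -
  have "EQ g = (\<Sum>x\<in>V. \<Sum>y\<in>V. r x y * (g x * g x - g x * g y))"
    unfolding EQ_def ip_def
  proof (intro sum.cong refl)
    fix x assume x: "x \<in> V"
    have "(\<Sum>y\<in>V. r x y * (g x * g x - g x * g y)) = (\<Sum>y\<in>V. r x y) * (g x * g x) - g x * (\<Sum>y\<in>V. r x y * g y)"
      by (simp add: right_diff_distrib sum_subtractf sum_distrib_right sum_distrib_left mult_ac)
    have "g x * mv V AQ g x = (\<Sum>y\<in>V. r x y) * (g x * g x) - g x * (\<Sum>y\<in>V. r x y * g y)"
      using mvAQ[OF x] tot[OF x] by (simp add: right_diff_distrib)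
    also have "\<dots> = (\<Sum>y\<in>V. r x y * (g x * g x - g x * g y))" using \<open>(\<Sum>y\<in>V. r x y * (g x * g x - g x * g y)) = _\<close> by simp
    finally show "g x * mv V AQ g x = (\<Sum>y\<in>V. r x y * (g x * g x - g x * g y))" .
  qed
  moreover have "(\<Sum>x\<in>V. \<Sum>y\<in>V. r x y * (g x * g x - g x * g y)) = (\<Sum>x\<in>V. \<Sum>y\<in>V. r x y * (g y * g y - g x * g y))"
  proof -
    have "(\<Sum>x\<in>V. \<Sum>y\<in>V. r x y * (g x * g x - g x * g y)) = (\<Sum>y\<in>V. \<Sum>x\<in>V. r x y * (g x * g x - g x * g y))"
      by (rule sum.swap)
    also have "\<dots> = (\<Sum>x\<in>V. \<Sum>y\<in>V. r x y * (g y * g y - g x * g y))"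
      using sym by (intro sum.cong refl) (simp add: mult_ac)
    finally show ?thesis .
  qed
  ultimately have "2 * EQ g = (\<Sum>x\<in>V. \<Sum>y\<in>V. r x y * (g x * g x - g x * g y) + r x y * (g y * g y - g x * g y))"
    by (simp add: sum.distrib)
  also have "\<dots> = (\<Sum>x\<in>V. \<Sum>y\<in>V. r x y * (g x - g y)\<^sup>2)"
    by (intro sum.cong refl) (simp add: power2_eq_square algebra_simps)
  finally show ?thesis .
qed

lemma EQ_nonneg: "EQ g \<ge> 0"
proof -
  have "(\<Sum>x\<in>V. \<Sum>y\<in>V. r x y * (g x - g y)\<^sup>2) \<ge> 0"
    by (intro sum_nonneg mult_nonneg_nonneg) (auto simp: nonneg)
  then show ?thesis using EQ2[of g] by simp
qed

lemma EQ_shift: "EQ (\<lambda>x. g x + c) = EQ g"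
  using EQ2[of g] EQ2[of "\<lambda>x. g x + c"] by simp

lemma EQ_zero_const:
  assumes "EQ g = 0" "x \<in> V" "y \<in> V"
  shows "g x = g y"
proof -
  have z: "(\<Sum>x\<in>V. \<Sum>y\<in>V. r x y * (g x - g y)\<^sup>2) = 0" using EQ2[of g] assms(1) by simp
  have nn: "\<And>a b. a \<in> V \<Longrightarrow> b \<in> V \<Longrightarrow> r a b * (g a - g b)\<^sup>2 \<ge> 0"
    by (simp add: nonneg)
  have edge: "g a = g b" if "a \<in> V" "b \<in> V" "r a b > 0" for a b
  proof -
    have "(\<Sum>y\<in>V. r a y * (g a - g y)\<^sup>2) = 0"
      using z sum_nonneg_eq_0_iff[OF finV, of "\<lambda>x. \<Sum>y\<in>V. r x y * (g x - g y)\<^sup>2"] that(1) nn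
      by (simp add: sum_nonneg)
    then have "\<forall>y\<in>V. r a y * (g a - g y)\<^sup>2 = 0"
      using sum_nonneg_eq_0_iff[OF finV, of "\<lambda>y. r a y * (g a - g y)\<^sup>2"] that nn by simp
    then have "r a b * (g a - g b)\<^sup>2 = 0" using that(2) by blast
    then show ?thesis using that(3) by simp
  qed
  from irr assms(2,3) have "(x, y) \<in> {(a, b). a \<in> V \<and> b \<in> V \<and> r a b > 0}\<^sup>*"
    unfolding irreducible_chain_def by auto
  then show ?thesis
  proof (induction rule: rtrancl_induct)
    case base then show ?case by simp
  next
    case (step b c) then show ?case using edge by auto
  qed
qed

definition gam :: real where "gam = spectral_gap V r"

lemma poincare_all:
  "gam > 0 \<and> (\<forall>g. (\<Sum>x\<in>V. g x) = 0 \<longrightarrow> EQ g \<ge> gam * ip V g g)"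
proof -
  obtain K \<phi> \<mu> where sp: "spec V AQ K \<phi> \<mu>"
    using spectral[OF finV symAQ] unfolding spec_def using finV symAQ by blast
  interpret spec V AQ K \<phi> \<mu> by (rule sp)
  define G where "G = {mu. mu > 0 \<and> (\<exists>f. (\<exists>x\<in>V. f x \<noteq> 0) \<and> (\<forall>x\<in>V. - generator V r f x = mu * f x))}"
  have gG: "gam = Inf G" unfolding gam_def spectral_gap_def G_def by simp
  have mu_nn: "\<mu> k \<ge> 0" if "k < K" for k using mu_eq[OF that] EQ_nonneg unfolding EQ_def by simp
  have mu_const: "\<phi> k x = \<phi> k y" if "k < K" "\<mu> k = 0" "x \<in> V" "y \<in> V" for k x y
    using EQ_zero_const[of "\<phi> k" x y] mu_eq[OF that(1)] that unfolding EQ_def by simp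
  have phi_nz: "\<exists>x\<in>V. \<phi> k x \<noteq> 0" if "k < K" for k
  proof (rule ccontr)
    assume "\<not> ?thesis"
    then have "ip V (\<phi> k) (\<phi> k) = 0" unfolding ip_def by simp
    then show False using orth that unfolding orthonormal_def by auto
  qed
  have muG: "\<mu> k \<in> G" if "k < K" "\<mu> k > 0" for k
    unfolding G_def using that phi_nz[OF that(1)] gen_eq eig_at[OF that(1)] by auto
  have bddG: "bdd_below G" unfolding G_def by (intro bdd_belowI[of _ 0]) auto
  have gam_le: "gam \<le> \<mu> k" if "k < K" "\<mu> k > 0" for k
    unfolding gG using cInf_lower[OF muG[OF that] bddG] .
  have Gsub: "\<exists>k<K. \<mu> k > 0 \<and> m = \<mu> k" if "m \<in> G" for m
  proof -
    from that obtain f where m: "m > 0" and f: "\<exists>x\<in>V. f x \<noteq> 0" "\<forall>x\<in>V. - generator V r f x = m * f x"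
      unfolding G_def by auto
    from f(1) compl obtain k where k: "k < K" "ip V f (\<phi> k) \<noteq> 0" unfolding complete_fam_def by blast
    have "ip V (mv V AQ f) (\<phi> k) = ip V (\<lambda>x. m * f x) (\<phi> k)"
      using f(2) gen_eq by (intro ip_cong) auto
    then have "\<mu> k * ip V f (\<phi> k) = m * ip V f (\<phi> k)" using ip_mv_phi[OF k(1)] by (simp add: ip_scale_left)
    then have "m = \<mu> k" using k(2) by simp
    then show ?thesis using k m by auto
  qed
  have ex_pos: "\<exists>k<K. \<mu> k > 0"
  proof (rule ccontr)
    assume "\<not> ?thesis"
    then have z: "\<mu> k = 0" if "k < K" for k using mu_nn that by force
    obtain x y where xy: "x \<in> V" "y \<in> V" "x \<noteq> y"
    proof -
      have "\<not> card V \<le> Suc 0" using two by simp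
      then show ?thesis using card_le_Suc0_iff_eq[OF finV] that by blast
    qed
    have "(\<Sum>k<K. \<phi> k x * \<phi> k y) = (\<Sum>k<K. \<phi> k x * \<phi> k x)"
    proof (rule sum.cong)
      fix k assume "k \<in> {..<K}"
      then have k: "k < K" by simp
      show "\<phi> k x * \<phi> k y = \<phi> k x * \<phi> k x" using mu_const[OF k z[OF k] xy(2) xy(1)] by simp
    qed simp
    then show False using compl_mat[of x y] compl_mat[of x x] xy by simp
  qed
  define m0 where "m0 = Min (\<mu> ` {k. k < K \<and> \<mu> k > 0})"
  have fin0: "finite (\<mu> ` {k. k < K \<and> \<mu> k > 0})" by simp
  have ne0: "\<mu> ` {k. k < K \<and> \<mu> k > 0} \<noteq> {}" using ex_pos by auto
  have m0pos: "m0 > 0" unfolding m0_def using Min_in[OF fin0 ne0] by auto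
  have "m0 \<le> gam" unfolding gG
  proof (rule cInf_greatest)
    show "G \<noteq> {}" using ex_pos muG by auto
    fix m assume "m \<in> G"
    then obtain k where "k < K" "\<mu> k > 0" "m = \<mu> k" using Gsub by blast
    then show "m0 \<le> m" unfolding m0_def by (intro Min_le) auto
  qed
  then have gpos: "gam > 0" using m0pos by simp
  have "EQ g \<ge> gam * ip V g g" if g: "(\<Sum>x\<in>V. g x) = 0" for g
  proof -
    have "gam * ip V g g = (\<Sum>k<K. gam * (ip V g (\<phi> k))\<^sup>2)"
      using parseval[of g g] by (simp add: sum_distrib_left power2_eq_square)
    also have "\<dots> \<le> (\<Sum>k<K. \<mu> k * (ip V g (\<phi> k))\<^sup>2)"
    proof (intro sum_mono)
      fix k assume "k \<in> {..<K}"
      then have k: "k < K" by simp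
      show "gam * (ip V g (\<phi> k))\<^sup>2 \<le> \<mu> k * (ip V g (\<phi> k))\<^sup>2"
      proof (cases "\<mu> k > 0")
        case True then show ?thesis using gam_le[OF k] by (simp add: mult_right_mono)
      next
        case False
        then have z: "\<mu> k = 0" using mu_nn[OF k] by simp
        obtain x0 where x0: "x0 \<in> V" using Vne by auto
        have "ip V g (\<phi> k) = ip V g (\<lambda>x. \<phi> k x0 * 1)"
        proof (rule ip_cong)
          fix i assume "i \<in> V"
          then show "\<phi> k i = \<phi> k x0 * 1" using mu_const[OF k z \<open>i \<in> V\<close> x0] by simp
        qed simp
        also have "\<dots> = 0" using g unfolding ip_def by (simp add: sum_distrib_right[symmetric] mult.commute)
        finally show ?thesis by simp
      qed
    qed
    also have "\<dots> = EQ g" unfolding EQ_def by (simp add: quad)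
    finally show ?thesis .
  qed
  then show ?thesis using gpos by blast
qed

lemma gam_pos: "gam > 0" using poincare_all by blast

lemma poincare:
  "EQ g \<ge> gam * (ip V g g - (\<Sum>x\<in>V. g x)\<^sup>2 / real (card V))"
proof -
  define N where "N = real (card V)"
  have N: "N > 0" using Vne finV unfolding N_def by (simp add: card_gt_0_iff)
  define s where "s = (\<Sum>x\<in>V. g x)"
  define g0 where "g0 x = g x + (- s / N)" for x
  have "(\<Sum>x\<in>V. g0 x) = (\<Sum>x\<in>V. g x) + N * (- s / N)" unfolding g0_def N_def by (simp add: sum_subtractf)
  then have s0: "(\<Sum>x\<in>V. g0 x) = 0" using N unfolding s_def by simp
  have "ip V g0 g0 = (\<Sum>x\<in>V. (g x - s / N)\<^sup>2)" unfolding ip_def g0_def by (simp add: power2_eq_square)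
  also have "\<dots> = ip V g g - 2 * (s / N) * s + N * (s / N)\<^sup>2"
    using sum_sq_shift[OF finV, of g "s / N"] unfolding ip_def s_def N_def by (simp add: power2_eq_square)
  also have "\<dots> = ip V g g - s\<^sup>2 / N" using N by (simp add: power2_eq_square field_simps)
  finally have "ip V g0 g0 = ip V g g - s\<^sup>2 / N" .
  moreover have "EQ g0 = EQ g" unfolding g0_def by (rule EQ_shift)
  ultimately show ?thesis using poincare_all s0 unfolding s_def N_def by metis
qed


lemma anova:
  fixes w :: "'a \<times> 'a \<Rightarrow> real"
  shows "(\<Sum>x\<in>V. (\<Sum>y\<in>V. w (x,y))\<^sup>2) / real (card V) + (\<Sum>y\<in>V. (\<Sum>x\<in>V. w (x,y))\<^sup>2) / real (card V)
     \<le> (\<Sum>x\<in>V. \<Sum>y\<in>V. (w (x,y))\<^sup>2) + (\<Sum>x\<in>V. \<Sum>y\<in>V. w (x,y))\<^sup>2 / (real (card V))\<^sup>2"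
proof -
  define N where "N = real (card V)"
  have N: "N > 0" using Vne finV unfolding N_def by (simp add: card_gt_0_iff)
  define R where "R x = (\<Sum>y\<in>V. w (x,y))" for x
  define C where "C y = (\<Sum>x\<in>V. w (x,y))" for y
  define T where "T = (\<Sum>x\<in>V. \<Sum>y\<in>V. w (x,y))"
  define W where "W = (\<Sum>x\<in>V. \<Sum>y\<in>V. (w (x,y))\<^sup>2)"
  define u where "u x y = w (x,y) - R x / N" for x y
  have TR: "(\<Sum>x\<in>V. R x) = T" unfolding R_def T_def by simp
  have TC: "(\<Sum>y\<in>V. C y) = T" unfolding C_def T_def by (rule sum.swap[symmetric])
  have row: "(\<Sum>y\<in>V. (u x y)\<^sup>2) = (\<Sum>y\<in>V. (w (x,y))\<^sup>2) - (R x)\<^sup>2 / N" for x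
  proof -
    have "(\<Sum>y\<in>V. (u x y)\<^sup>2) = (\<Sum>y\<in>V. (w (x,y))\<^sup>2) - 2 * (R x / N) * R x + N * (R x / N)\<^sup>2"
      unfolding u_def using sum_sq_shift[OF finV, of "\<lambda>y. w (x,y)" "R x / N"] unfolding R_def N_def by simp
    also have "\<dots> = (\<Sum>y\<in>V. (w (x,y))\<^sup>2) - (R x)\<^sup>2 / N" using N by (simp add: power2_eq_square field_simps)
    finally show ?thesis .
  qed
  have sumrow: "(\<Sum>x\<in>V. \<Sum>y\<in>V. (u x y)\<^sup>2) = W - (\<Sum>x\<in>V. (R x)\<^sup>2) / N"
    unfolding W_def using row by (simp add: sum_subtractf sum_divide_distrib)
  have colsum: "(\<Sum>x\<in>V. u x y) = C y - T / N" for y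
    unfolding u_def C_def using TR by (simp add: sum_subtractf sum_divide_distrib[symmetric])
  have col: "(C y - T / N)\<^sup>2 / N \<le> (\<Sum>x\<in>V. (u x y)\<^sup>2)" for y
    using cs_sum[OF finV Vne, of "\<lambda>x. u x y"] colsum unfolding N_def by simp
  have "(\<Sum>y\<in>V. (C y - T / N)\<^sup>2 / N) \<le> (\<Sum>y\<in>V. \<Sum>x\<in>V. (u x y)\<^sup>2)"
    by (rule sum_mono) (rule col)
  also have "\<dots> = (\<Sum>x\<in>V. \<Sum>y\<in>V. (u x y)\<^sup>2)" by (rule sum.swap)
  finally have A: "(\<Sum>y\<in>V. (C y - T / N)\<^sup>2) / N \<le> W - (\<Sum>x\<in>V. (R x)\<^sup>2) / N"
    using sumrow by (simp add: sum_divide_distrib)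
  have "(\<Sum>y\<in>V. (C y - T / N)\<^sup>2) = (\<Sum>y\<in>V. (C y)\<^sup>2) - 2 * (T / N) * T + N * (T / N)\<^sup>2"
    using sum_sq_shift[OF finV, of C "T / N"] TC unfolding N_def by simp
  also have "\<dots> = (\<Sum>y\<in>V. (C y)\<^sup>2) - T\<^sup>2 / N" using N by (simp add: power2_eq_square field_simps)
  finally have B: "(\<Sum>y\<in>V. (C y - T / N)\<^sup>2) = (\<Sum>y\<in>V. (C y)\<^sup>2) - T\<^sup>2 / N" .
  from A B have "(\<Sum>y\<in>V. (C y)\<^sup>2) / N - T\<^sup>2 / N\<^sup>2 \<le> W - (\<Sum>x\<in>V. (R x)\<^sup>2) / N"
    using N by (simp add: diff_divide_distrib power2_eq_square)
  then have "(\<Sum>x\<in>V. (R x)\<^sup>2) / N + (\<Sum>y\<in>V. (C y)\<^sup>2) / N \<le> W + T\<^sup>2 / N\<^sup>2" by linarith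
  then show ?thesis unfolding N_def R_def C_def T_def W_def .
qed

definition EP :: "('a \<times> 'a \<Rightarrow> real) \<Rightarrow> real" where
  "EP w = (\<Sum>y\<in>V. EQ (\<lambda>x. w (x, y))) + (\<Sum>x\<in>V. EQ (\<lambda>y. w (x, y)))"

lemma pprod:
  "EP w \<ge> gam * ((\<Sum>x\<in>V. \<Sum>y\<in>V. (w (x,y))\<^sup>2) - (\<Sum>x\<in>V. \<Sum>y\<in>V. w (x,y))\<^sup>2 / (real (card V))\<^sup>2)"
proof -
  define N where "N = real (card V)"
  define W where "W = (\<Sum>x\<in>V. \<Sum>y\<in>V. (w (x,y))\<^sup>2)"
  define T where "T = (\<Sum>x\<in>V. \<Sum>y\<in>V. w (x,y))"
  have r1: "(\<Sum>x\<in>V. EQ (\<lambda>y. w (x, y))) \<ge> (\<Sum>x\<in>V. gam * ((\<Sum>y\<in>V. (w (x,y))\<^sup>2) - (\<Sum>y\<in>V. w (x,y))\<^sup>2 / N))"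
    by (rule sum_mono) (use poincare in \<open>simp add: ip_def power2_eq_square N_def\<close>)
  have r2: "(\<Sum>y\<in>V. EQ (\<lambda>x. w (x, y))) \<ge> (\<Sum>y\<in>V. gam * ((\<Sum>x\<in>V. (w (x,y))\<^sup>2) - (\<Sum>x\<in>V. w (x,y))\<^sup>2 / N))"
    by (rule sum_mono) (use poincare in \<open>simp add: ip_def power2_eq_square N_def\<close>)
  have e1: "(\<Sum>x\<in>V. gam * ((\<Sum>y\<in>V. (w (x,y))\<^sup>2) - (\<Sum>y\<in>V. w (x,y))\<^sup>2 / N))
      = gam * (W - (\<Sum>x\<in>V. (\<Sum>y\<in>V. w (x,y))\<^sup>2) / N)"
    unfolding W_def by (simp add: sum_distrib_left[symmetric] sum_subtractf sum_divide_distrib)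
  have e2: "(\<Sum>y\<in>V. gam * ((\<Sum>x\<in>V. (w (x,y))\<^sup>2) - (\<Sum>x\<in>V. w (x,y))\<^sup>2 / N))
      = gam * (W - (\<Sum>y\<in>V. (\<Sum>x\<in>V. w (x,y))\<^sup>2) / N)"
  proof -
    have "W = (\<Sum>y\<in>V. \<Sum>x\<in>V. (w (x,y))\<^sup>2)" unfolding W_def by (rule sum.swap)
    then show ?thesis by (simp add: sum_distrib_left[symmetric] sum_subtractf sum_divide_distrib)
  qed
  have an: "(\<Sum>x\<in>V. (\<Sum>y\<in>V. w (x,y))\<^sup>2) / N + (\<Sum>y\<in>V. (\<Sum>x\<in>V. w (x,y))\<^sup>2) / N \<le> W + T\<^sup>2 / N\<^sup>2"
    using anova[of w] unfolding N_def W_def T_def .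
  have "EP w \<ge> gam * (2 * W - ((\<Sum>x\<in>V. (\<Sum>y\<in>V. w (x,y))\<^sup>2) / N + (\<Sum>y\<in>V. (\<Sum>x\<in>V. w (x,y))\<^sup>2) / N))"
    using r1 r2 e1 e2 unfolding EP_def by (simp add: algebra_simps)
  moreover have "gam * (2 * W - ((\<Sum>x\<in>V. (\<Sum>y\<in>V. w (x,y))\<^sup>2) / N + (\<Sum>y\<in>V. (\<Sum>x\<in>V. w (x,y))\<^sup>2) / N))
      \<ge> gam * (W - T\<^sup>2 / N\<^sup>2)"
    using an gam_pos by (intro mult_left_mono) auto
  ultimately show ?thesis unfolding W_def T_def N_def by linarith
qed

end


context mchain begin

lemma finP: "finite (offdiag V)"
proof -
  have "offdiag V \<subseteq> V \<times> V" unfolding offdiag_def by auto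
  then show ?thesis using finV finite_subset by blast
qed

lemma P_eq: "offdiag V = {p \<in> V \<times> V. fst p \<noteq> snd p}"
  unfolding offdiag_def by auto

lemma dsum: "(\<Sum>p\<in>V \<times> V. g p) = (\<Sum>x\<in>V. \<Sum>y\<in>V. g (x, y))"
  by (simp add: sum.cartesian_product)

lemma sumP: "(\<Sum>p\<in>offdiag V. f p) = (\<Sum>x\<in>V. \<Sum>y\<in>V. if x \<noteq> y then f (x, y) else 0)"
proof -
  have "(\<Sum>p\<in>offdiag V. f p) = (\<Sum>p\<in>V \<times> V. if fst p \<noteq> snd p then f p else 0)"
    unfolding P_eq using finV by (simp add: sum.inter_filter)
  also have "\<dots> = (\<Sum>x\<in>V. \<Sum>y\<in>V. if x \<noteq> y then f (x, y) else 0)" unfolding dsum by simp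
  finally show ?thesis .
qed

definition ext :: "('a \<times> 'a \<Rightarrow> real) \<Rightarrow> 'a \<times> 'a \<Rightarrow> real" where
  "ext v p = (if p \<in> offdiag V then v p else 0)"

lemma sum_ext: "(\<Sum>q\<in>V \<times> V. g q * ext v q) = (\<Sum>q\<in>offdiag V. g q * v q)"
proof -
  have "(\<Sum>q\<in>V \<times> V. g q * ext v q) = (\<Sum>q\<in>V \<times> V. if q \<in> offdiag V then g q * v q else 0)"
    unfolding ext_def by (intro sum.cong) auto
  also have "\<dots> = (\<Sum>q\<in>{q \<in> V \<times> V. q \<in> offdiag V}. g q * v q)"
    using finV by (simp add: sum.inter_filter)
  also have "{q \<in> V \<times> V. q \<in> offdiag V} = offdiag V" unfolding offdiag_def by auto
  finally show ?thesis .
qed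

lemma sum_minus_pt:
  assumes "y \<in> V"
  shows "(\<Sum>x\<in>V. f x * (if x \<noteq> y then 1 else 0)) = (\<Sum>x\<in>V. f x) - (f y :: real)"
proof -
  have "(\<Sum>x\<in>V. f x * (if x \<noteq> y then 1 else 0)) = (\<Sum>x\<in>V. f x - (if x = y then f x else 0))"
    by (intro sum.cong) auto
  also have "\<dots> = (\<Sum>x\<in>V. f x) - f y" using assms finV by (simp add: sum_subtractf)
  finally show ?thesis .
qed

lemma gm: "x \<in> V \<Longrightarrow> y \<in> V \<Longrightarrow> gen_matrix V r x y = - AQ x y"
proof -
  assume xy: "x \<in> V" "y \<in> V"
  have "(\<Sum>z\<in>V - {x}. r x z) = 1" using tot[OF xy(1)] diag0[OF xy(1)] xy finV
    by (simp add: sum_diff1)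
  then show ?thesis unfolding gen_matrix_def AQ_def using diag0 xy by (cases "x = y") auto
qed

lemma KG_form:
  "p \<in> V \<times> V \<Longrightarrow> q \<in> V \<times> V \<Longrightarrow> killed_gen V r p q =
     -(AQ (fst p) (fst q) * (if snd p = snd q then 1 else 0) + (if fst p = fst q then 1 else 0) * AQ (snd p) (snd q))"
  unfolding killed_gen_def by (auto simp: gm)

lemma symKG: "symm (offdiag V) (killed_gen V r)"
  unfolding symm_def killed_gen_def offdiag_def using symAQ gm unfolding symm_def by auto

lemma KG_row:
  assumes p: "p \<in> V \<times> V"
  shows "(\<Sum>q\<in>V \<times> V. killed_gen V r p q * u q)
     = -(mv V AQ (\<lambda>x'. u (x', snd p)) (fst p) + mv V AQ (\<lambda>y'. u (fst p, y')) (snd p))"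
proof -
  obtain x y where xy: "p = (x, y)" "x \<in> V" "y \<in> V" using p by auto
  have "(\<Sum>q\<in>V \<times> V. killed_gen V r p q * u q)
     = (\<Sum>x'\<in>V. \<Sum>y'\<in>V. -(AQ x x' * (if y = y' then 1 else 0) * u (x', y')) - (if x = x' then 1 else 0) * AQ y y' * u (x', y'))"
    unfolding dsum using xy by (intro sum.cong refl) (simp add: KG_form algebra_simps)
  also have "\<dots> = -(\<Sum>x'\<in>V. AQ x x' * u (x', y)) - (\<Sum>y'\<in>V. AQ y y' * u (x, y'))"
  proof -
    have a: "(\<Sum>y'\<in>V. AQ x x' * (if y = y' then 1 else 0) * u (x', y')) = AQ x x' * u (x', y)" for x'
    proof -
      have "(\<Sum>y'\<in>V. AQ x x' * (if y = y' then 1 else 0) * u (x', y')) = (\<Sum>y'\<in>V. if y = y' then AQ x x' * u (x', y') else 0)"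
        by (intro sum.cong) auto
      then show ?thesis using xy finV by simp
    qed
    have b: "(\<Sum>x'\<in>V. \<Sum>y'\<in>V. (if x = x' then 1 else 0) * AQ y y' * u (x', y')) = (\<Sum>y'\<in>V. AQ y y' * u (x, y'))"
    proof -
      have "(\<Sum>x'\<in>V. \<Sum>y'\<in>V. (if x = x' then 1 else 0) * AQ y y' * u (x', y')) = (\<Sum>x'\<in>V. if x = x' then (\<Sum>y'\<in>V. AQ y y' * u (x', y')) else 0)"
        by (intro sum.cong) auto
      then show ?thesis using xy finV by simp
    qed
    show ?thesis using a b by (simp add: sum_subtractf sum_negf)
  qed
  finally show ?thesis using xy unfolding mv_def by simp
qed

lemma mvKG: "p \<in> offdiag V \<Longrightarrow> mv (offdiag V) (killed_gen V r) v p
   = -(mv V AQ (\<lambda>x'. ext v (x', snd p)) (fst p) + mv V AQ (\<lambda>y'. ext v (fst p, y')) (snd p))"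
proof -
  assume p: "p \<in> offdiag V"
  then have pV: "p \<in> V \<times> V" unfolding offdiag_def by auto
  have "mv (offdiag V) (killed_gen V r) v p = (\<Sum>q\<in>V \<times> V. killed_gen V r p q * ext v q)"
    unfolding mv_def sum_ext ..
  then show ?thesis using KG_row[OF pV] by simp
qed

lemma quadK: "ip (offdiag V) v (mv (offdiag V) (killed_gen V r) v) = - EP (ext v)"
proof -
  define F where "F p = -(mv V AQ (\<lambda>x'. ext v (x', snd p)) (fst p) + mv V AQ (\<lambda>y'. ext v (fst p, y')) (snd p))" for p
  have "ip (offdiag V) v (mv (offdiag V) (killed_gen V r) v) = (\<Sum>p\<in>offdiag V. F p * v p)"
    unfolding ip_def using mvKG unfolding F_def by (intro sum.cong) (auto simp: mult.commute)
  also have "\<dots> = (\<Sum>p\<in>V \<times> V. F p * ext v p)" by (rule sum_ext[symmetric])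
  also have "\<dots> = (\<Sum>x\<in>V. \<Sum>y\<in>V. F (x, y) * ext v (x, y))" by (rule dsum)
  also have "\<dots> = (\<Sum>x\<in>V. \<Sum>y\<in>V. - (ext v (x, y) * mv V AQ (\<lambda>x'. ext v (x', y)) x)
       - ext v (x, y) * mv V AQ (\<lambda>y'. ext v (x, y')) y)"
    unfolding F_def by (intro sum.cong refl) (simp add: algebra_simps)
  also have "\<dots> = - ((\<Sum>x\<in>V. \<Sum>y\<in>V. ext v (x, y) * mv V AQ (\<lambda>x'. ext v (x', y)) x)
       + (\<Sum>x\<in>V. \<Sum>y\<in>V. ext v (x, y) * mv V AQ (\<lambda>y'. ext v (x, y')) y))"
    by (simp only: sum_subtractf sum_negf)
  also have "(\<Sum>x\<in>V. \<Sum>y\<in>V. ext v (x, y) * mv V AQ (\<lambda>x'. ext v (x', y)) x) = (\<Sum>y\<in>V. EQ (\<lambda>x. ext v (x, y)))"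
    unfolding EQ_def ip_def by (rule sum.swap)
  also have "(\<Sum>x\<in>V. \<Sum>y\<in>V. ext v (x, y) * mv V AQ (\<lambda>y'. ext v (x, y')) y) = (\<Sum>x\<in>V. EQ (\<lambda>y. ext v (x, y)))"
    unfolding EQ_def ip_def ..
  finally show ?thesis unfolding EP_def by simp
qed

lemma colKG: "q \<in> offdiag V \<Longrightarrow> (\<Sum>p\<in>offdiag V. killed_gen V r p q) = -2 * r (fst q) (snd q)"
proof -
  assume q: "q \<in> offdiag V"
  obtain x y where xy: "q = (x, y)" "x \<in> V" "y \<in> V" "x \<noteq> y" using q unfolding offdiag_def by auto
  have "(\<Sum>p\<in>offdiag V. killed_gen V r p q) = (\<Sum>p\<in>offdiag V. killed_gen V r q p * 1)"
    using symKG q unfolding symm_def by (intro sum.cong) auto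
  also have "\<dots> = mv (offdiag V) (killed_gen V r) (\<lambda>_. 1) q" unfolding mv_def ..
  also have "\<dots> = -(mv V AQ (\<lambda>x'. ext (\<lambda>_. 1) (x', y)) x + mv V AQ (\<lambda>y'. ext (\<lambda>_. 1) (x, y')) y)"
    using mvKG[OF q] xy by simp
  also have "mv V AQ (\<lambda>x'. ext (\<lambda>_. 1) (x', y)) x = r x y"
  proof -
    have "mv V AQ (\<lambda>x'. ext (\<lambda>_. 1) (x', y)) x = ext (\<lambda>_. 1) (x, y) - (\<Sum>x'\<in>V. r x x' * ext (\<lambda>_. 1) (x', y))"
      by (rule mvAQ[OF xy(2)])
    also have "(\<Sum>x'\<in>V. r x x' * ext (\<lambda>_. 1) (x', y)) = (\<Sum>x'\<in>V. r x x' * (if x' \<noteq> y then 1 else 0))"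
      unfolding ext_def offdiag_def using xy by (intro sum.cong) auto
    also have "\<dots> = 1 - r x y" using sum_minus_pt[OF xy(3)] tot[OF xy(2)] by simp
    finally show ?thesis using xy unfolding ext_def offdiag_def by simp
  qed
  also have "mv V AQ (\<lambda>y'. ext (\<lambda>_. 1) (x, y')) y = r y x"
  proof -
    have "mv V AQ (\<lambda>y'. ext (\<lambda>_. 1) (x, y')) y = ext (\<lambda>_. 1) (x, y) - (\<Sum>y'\<in>V. r y y' * ext (\<lambda>_. 1) (x, y'))"
      by (rule mvAQ[OF xy(3)])
    also have "(\<Sum>y'\<in>V. r y y' * ext (\<lambda>_. 1) (x, y')) = (\<Sum>y'\<in>V. r y y' * (if y' \<noteq> x then 1 else 0))"
      unfolding ext_def offdiag_def using xy by (intro sum.cong) auto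
    also have "\<dots> = 1 - r y x" using sum_minus_pt[OF xy(2)] tot[OF xy(3)] by simp
    finally show ?thesis using xy unfolding ext_def offdiag_def by simp
  qed
  finally show ?thesis using xy sym[OF xy(2,3)] by simp
qed


lemma ext_sq: "(\<Sum>x\<in>V. \<Sum>y\<in>V. (ext v (x,y))\<^sup>2) = ip (offdiag V) v v"
proof -
  have "(\<Sum>x\<in>V. \<Sum>y\<in>V. (ext v (x,y))\<^sup>2) = (\<Sum>q\<in>V \<times> V. ext v q * ext v q)"
    unfolding dsum by (simp add: power2_eq_square)
  also have "\<dots> = (\<Sum>q\<in>offdiag V. ext v q * v q)" by (rule sum_ext)
  also have "\<dots> = ip (offdiag V) v v" unfolding ip_def ext_def by simp
  finally show ?thesis .
qed

lemma ext_sum: "(\<Sum>x\<in>V. \<Sum>y\<in>V. ext v (x,y)) = (\<Sum>q\<in>offdiag V. v q)"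
proof -
  have "(\<Sum>x\<in>V. \<Sum>y\<in>V. ext v (x,y)) = (\<Sum>q\<in>V \<times> V. 1 * ext v q)"
    unfolding dsum by simp
  also have "\<dots> = (\<Sum>q\<in>offdiag V. 1 * v q)" by (rule sum_ext)
  finally show ?thesis by simp
qed

lemma ext_r: "(\<Sum>x\<in>V. \<Sum>y\<in>V. r x y * ext v (x,y)) = (\<Sum>q\<in>offdiag V. r (fst q) (snd q) * v q)"
proof -
  have "(\<Sum>x\<in>V. \<Sum>y\<in>V. r x y * ext v (x,y)) = (\<Sum>q\<in>V \<times> V. r (fst q) (snd q) * ext v q)"
    unfolding dsum by simp
  also have "\<dots> = (\<Sum>q\<in>offdiag V. r (fst q) (snd q) * v q)" by (rule sum_ext)
  finally show ?thesis .
qed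

lemma cardP: "1 \<le> card (offdiag V) \<and> real (card (offdiag V)) \<le> (real (card V))\<^sup>2 - 1"
proof -
  obtain x y where xy: "x \<in> V" "y \<in> V" "x \<noteq> y"
  proof -
    have "\<not> card V \<le> Suc 0" using two by simp
    then show ?thesis using card_le_Suc0_iff_eq[OF finV] that by blast
  qed
  have "(x, y) \<in> offdiag V" using xy unfolding offdiag_def by auto
  then have c1: "1 \<le> card (offdiag V)" using finP by (metis One_nat_def Suc_leI card_gt_0_iff empty_iff)
  have sub: "offdiag V \<subseteq> V \<times> V - {(x, x)}" unfolding offdiag_def by auto
  have "card (offdiag V) \<le> card (V \<times> V - {(x, x)})"
    using card_mono[OF _ sub] finV by simp
  also have "\<dots> = card V * card V - 1" using xy finV by (simp add: card_cartesian_product)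
  finally have "card (offdiag V) \<le> card V * card V - 1" .
  moreover have "card V * card V \<ge> 1" using two by (simp add: Suc_le_eq)
  ultimately have "real (card (offdiag V)) \<le> real (card V) * real (card V) - 1"
    by (metis of_nat_1 of_nat_diff of_nat_le_iff of_nat_mult)
  then show ?thesis using c1 by (simp add: power2_eq_square)
qed

lemma chain_bounds:
  assumes t: "t > 0"
  shows "\<exists>c l T. 0 \<le> c \<and> c \<le> 1 \<and> l > 0 \<and> t_meet V r > 0 \<and> c / l \<le> t_meet V r
    \<and> t_meet V r \<le> c / l + 1 / gam \<and> 1 - c \<le> l / gam
    \<and> 2 * t_meet V r * alpha V r t / real (card V) = t_meet V r * c * l * exp (- (l * t)) + T
    \<and> 0 \<le> T \<and> T \<le> t_meet V r * (1 - c) / t"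
proof -
  obtain K \<psi> \<nu> where sp: "spec (offdiag V) (killed_gen V r) K \<psi> \<nu>"
    using spectral[OF finP symKG] unfolding spec_def using finP symKG by blast
  interpret spec "offdiag V" "killed_gen V r" K \<psi> \<nu> by (rule sp)
  define N where "N = real (card V)"
  have N: "N > 0" using Vne finV unfolding N_def by (simp add: card_gt_0_iff)
  define \<beta> where "\<beta> k = (\<Sum>q\<in>offdiag V. \<psi> k q)" for k
  define lam where "lam k = - \<nu> k" for k
  define cc where "cc k = (\<beta> k)\<^sup>2 / N\<^sup>2" for k
  have gpos: "gam > 0" by (rule gam_pos)
  have cc_nn: "cc k \<ge> 0" for k unfolding cc_def by simp
  have lamEP: "lam k = EP (ext (\<psi> k))" if "k < K" for k
    unfolding lam_def using mu_eq[OF that] quadK by simp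
  have psinorm: "ip (offdiag V) (\<psi> k) (\<psi> k) = 1" if "k < K" for k
    using orth that unfolding orthonormal_def by simp
  have lam_lb: "lam k \<ge> gam * (1 - cc k)" if "k < K" for k
    using pprod[of "ext (\<psi> k)"] lamEP[OF that] ext_sq ext_sum psinorm[OF that]
    unfolding cc_def \<beta>_def N_def by simp
  have ip1: "ip (offdiag V) (\<lambda>_. 1) (\<psi> k) = \<beta> k" for k unfolding ip_def \<beta>_def by simp
  have sum_cc: "(\<Sum>k<K. cc k) = real (card (offdiag V)) / N\<^sup>2"
  proof -
    have "real (card (offdiag V)) = ip (offdiag V) (\<lambda>_. 1) (\<lambda>_. 1)" unfolding ip_def by simp
    also have "\<dots> = (\<Sum>k<K. (\<beta> k)\<^sup>2)" using parseval[of "\<lambda>_. 1" "\<lambda>_. 1"] ip1 by (simp add: power2_eq_square)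
    finally show ?thesis unfolding cc_def by (simp add: sum_divide_distrib)
  qed
  have sum_cc_lt: "(\<Sum>k<K. cc k) < 1"
  proof -
    have "real (card (offdiag V)) / N\<^sup>2 \<le> (N\<^sup>2 - 1) / N\<^sup>2" using cardP N unfolding N_def
      by (intro divide_right_mono) auto
    also have "\<dots> < 1" using N by simp
    finally show ?thesis using sum_cc by simp
  qed
  have sum_cc_pos: "(\<Sum>k<K. cc k) > 0" using sum_cc cardP N by simp
  have cc_le: "cc k \<le> (\<Sum>j<K. cc j)" if "k < K" for k
    using that cc_nn by (intro member_le_sum) auto
  have lam_pos: "lam k > 0" if "k < K" for k
  proof -
    have "1 - cc k > 0" using cc_le[OF that] sum_cc_lt by simp
    then show ?thesis using lam_lb[OF that] gpos by (smt (verit) mult_pos_pos)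
  qed
  have Kpos: "K > 0" using sum_cc_pos by (cases K) auto
  obtain k0 where k0: "k0 < K" "\<And>k. k < K \<Longrightarrow> lam k0 \<le> lam k"
  proof -
    have "Min (lam ` {..<K}) \<in> lam ` {..<K}" using Kpos by (intro Min_in) auto
    then obtain k0 where "k0 < K" "lam k0 = Min (lam ` {..<K})" by auto
    then show ?thesis using that by (metis Min_le finite_imageI finite_lessThan imageI lessThan_iff)
  qed
  have gap: "lam k \<ge> gam" if k: "k < K" "k \<noteq> k0" for k
  proof (cases "\<beta> k = 0")
    case True
    then show ?thesis using lam_lb[OF k(1)] unfolding cc_def by simp
  next
    case False
    define a where "a = \<beta> k"
    define b where "b = \<beta> k0"
    define v where "v p = a * \<psi> k0 p - b * \<psi> k p" for p
    have o1: "ip (offdiag V) (\<psi> k0) (\<psi> k0) = 1" "ip (offdiag V) (\<psi> k) (\<psi> k) = 1"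
      "ip (offdiag V) (\<psi> k0) (\<psi> k) = 0" "ip (offdiag V) (\<psi> k) (\<psi> k0) = 0"
      using orth k k0(1) unfolding orthonormal_def by auto
    have vk0: "ip (offdiag V) v (\<psi> k0) = a" unfolding v_def using o1
      by (simp add: ip_diff_left ip_scale_left)
    have vk: "ip (offdiag V) v (\<psi> k) = - b" unfolding v_def using o1
      by (simp add: ip_diff_left ip_scale_left)
    have vv: "ip (offdiag V) v v = a\<^sup>2 + b\<^sup>2"
    proof -
      have "ip (offdiag V) v v = ip (offdiag V) v (\<lambda>p. a * \<psi> k0 p - b * \<psi> k p)"
        by (rule ip_cong) (simp_all add: v_def)
      also have "\<dots> = a * ip (offdiag V) v (\<psi> k0) - b * ip (offdiag V) v (\<psi> k)"
        by (simp only: ip_diff_right ip_scale_right)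
      finally show ?thesis using vk0 vk by (simp add: power2_eq_square)
    qed
    have vsum: "(\<Sum>q\<in>offdiag V. v q) = 0"
      unfolding v_def a_def b_def \<beta>_def by (simp add: sum_subtractf flip: sum_distrib_left)
    have vq: "ip (offdiag V) v (mv (offdiag V) (killed_gen V r) v) = a\<^sup>2 * \<nu> k0 + b\<^sup>2 * \<nu> k"
    proof -
      have "ip (offdiag V) v (mv (offdiag V) (killed_gen V r) v) = ip (offdiag V) (mv (offdiag V) (killed_gen V r) v) v"
        by (rule ip_comm)
      also have "\<dots> = ip (offdiag V) (mv (offdiag V) (killed_gen V r) v) (\<lambda>p. a * \<psi> k0 p - b * \<psi> k p)"
        by (rule ip_cong) (simp_all add: v_def)
      also have "\<dots> = a * ip (offdiag V) (mv (offdiag V) (killed_gen V r) v) (\<psi> k0) - b * ip (offdiag V) (mv (offdiag V) (killed_gen V r) v) (\<psi> k)"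
        by (simp only: ip_diff_right ip_scale_right)
      also have "\<dots> = a * (\<nu> k0 * a) - b * (\<nu> k * (- b))"
        using ip_mv_phi[OF k0(1), of v] ip_mv_phi[OF k(1), of v] vk0 vk by simp
      finally show ?thesis by (simp add: power2_eq_square algebra_simps)
    qed
    have "EP (ext v) = a\<^sup>2 * lam k0 + b\<^sup>2 * lam k" using quadK[of v] vq unfolding lam_def by simp
    also have "\<dots> \<le> a\<^sup>2 * lam k + b\<^sup>2 * lam k" using k0(2)[OF k(1)] by (simp add: mult_left_mono)
    finally have "EP (ext v) \<le> lam k * (a\<^sup>2 + b\<^sup>2)" by (simp add: algebra_simps)
    moreover have "EP (ext v) \<ge> gam * (a\<^sup>2 + b\<^sup>2)"
      using pprod[of "ext v"] ext_sq[of v] ext_sum[of v] vv vsum by simp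
    moreover have "a\<^sup>2 + b\<^sup>2 > 0" using False unfolding a_def by (simp add: add_pos_nonneg)
    ultimately show ?thesis using mult_right_le_imp_le[of gam "a\<^sup>2 + b\<^sup>2" "lam k"] by linarith
  qed
  have ms: "meet_survival V r s x y = (\<Sum>k<K. \<beta> k * ext (\<psi> k) (x,y) * exp (- lam k * s))"
    if xy: "x \<in> V" "y \<in> V" for s x y
  proof (cases "x = y")
    case True
    then show ?thesis unfolding meet_survival_def ext_def offdiag_def by simp
  next
    case False
    then have P: "(x, y) \<in> offdiag V" using xy unfolding offdiag_def by auto
    have "meet_survival V r s x y = (\<Sum>q\<in>offdiag V. \<Sum>k<K. exp (\<nu> k * s) * \<psi> k (x,y) * \<psi> k q)"
      unfolding meet_survival_def using False P mat_exp_eq by simp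
    also have "\<dots> = (\<Sum>k<K. \<Sum>q\<in>offdiag V. exp (\<nu> k * s) * \<psi> k (x,y) * \<psi> k q)" by (rule sum.swap)
    also have "\<dots> = (\<Sum>k<K. \<beta> k * ext (\<psi> k) (x,y) * exp (- lam k * s))"
    proof (intro sum.cong refl)
      fix k
      have "(\<Sum>q\<in>offdiag V. exp (\<nu> k * s) * \<psi> k (x,y) * \<psi> k q) = exp (\<nu> k * s) * \<psi> k (x,y) * (\<Sum>q\<in>offdiag V. \<psi> k q)"
        by (simp add: sum_distrib_left)
      then show "(\<Sum>q\<in>offdiag V. exp (\<nu> k * s) * \<psi> k (x,y) * \<psi> k q) = \<beta> k * ext (\<psi> k) (x,y) * exp (- lam k * s)"
        unfolding \<beta>_def lam_def ext_def using P by (simp add: mult_ac)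
    qed
    finally show ?thesis .
  qed
  have integ: "integral {0..} (\<lambda>s. meet_survival V r s x y) = (\<Sum>k<K. \<beta> k * ext (\<psi> k) (x,y) / lam k)"
    if xy: "x \<in> V" "y \<in> V" for x y
  proof -
    have "((\<lambda>s. \<Sum>k<K. \<beta> k * ext (\<psi> k) (x,y) * exp (- lam k * s)) has_integral
        (\<Sum>k<K. \<beta> k * ext (\<psi> k) (x,y) * (exp (- lam k * 0) / lam k))) {0..}"
      by (intro has_integral_sum finite_lessThan has_integral_mult_right has_integral_exp_minus_to_infinity lam_pos) auto
    moreover have "(\<lambda>s. meet_survival V r s x y) = (\<lambda>s. \<Sum>k<K. \<beta> k * ext (\<psi> k) (x,y) * exp (- lam k * s))"
      using ms[OF xy] by auto
    ultimately show ?thesis by (simp add: integral_unique)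
  qed
  have tm: "t_meet V r = (\<Sum>k<K. cc k / lam k)"
  proof -
    have "(\<Sum>x\<in>V. \<Sum>y\<in>V. integral {0..} (\<lambda>s. meet_survival V r s x y))
        = (\<Sum>x\<in>V. \<Sum>y\<in>V. \<Sum>k<K. \<beta> k * ext (\<psi> k) (x,y) / lam k)"
      using integ by simp
    also have "\<dots> = (\<Sum>x\<in>V. \<Sum>k<K. \<Sum>y\<in>V. \<beta> k * ext (\<psi> k) (x,y) / lam k)"
      by (intro sum.cong refl) (rule sum.swap)
    also have "\<dots> = (\<Sum>k<K. \<Sum>x\<in>V. \<Sum>y\<in>V. \<beta> k * ext (\<psi> k) (x,y) / lam k)"
      by (rule sum.swap)
    also have "\<dots> = (\<Sum>k<K. \<beta> k / lam k * (\<Sum>x\<in>V. \<Sum>y\<in>V. ext (\<psi> k) (x,y)))"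
      by (intro sum.cong refl) (simp add: sum_distrib_left)
    also have "\<dots> = (\<Sum>k<K. (\<beta> k)\<^sup>2 / lam k)"
      using ext_sum unfolding \<beta>_def by (simp add: power2_eq_square)
    finally show ?thesis unfolding t_meet_def cc_def N_def
      by (simp add: sum_distrib_left)
  qed
  have rho: "(\<Sum>q\<in>offdiag V. r (fst q) (snd q) * \<psi> k q) = lam k * \<beta> k / 2" if k: "k < K" for k
  proof -
    have "\<nu> k * \<beta> k = (\<Sum>p\<in>offdiag V. mv (offdiag V) (killed_gen V r) (\<psi> k) p)"
      unfolding \<beta>_def sum_distrib_left using eig_at[OF k] by simp
    also have "\<dots> = (\<Sum>p\<in>offdiag V. \<Sum>q\<in>offdiag V. killed_gen V r p q * \<psi> k q)" unfolding mv_def ..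
    also have "\<dots> = (\<Sum>q\<in>offdiag V. \<Sum>p\<in>offdiag V. killed_gen V r p q * \<psi> k q)" by (rule sum.swap)
    also have "\<dots> = (\<Sum>q\<in>offdiag V. (-2 * r (fst q) (snd q)) * \<psi> k q)"
      using colKG by (intro sum.cong refl) (simp add: sum_distrib_right[symmetric])
    finally have "\<nu> k * \<beta> k = -2 * (\<Sum>q\<in>offdiag V. r (fst q) (snd q) * \<psi> k q)"
      by (simp add: sum_distrib_left mult_ac)
    then show ?thesis unfolding lam_def by simp
  qed
  have al: "alpha V r t = (1 / N) * (\<Sum>k<K. (\<beta> k)\<^sup>2 * lam k * exp (- lam k * t) / 2)"
  proof -
    have "(\<Sum>x\<in>V. \<Sum>y\<in>V. (r x y / total_rate V r x) * meet_survival V r t x y)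
        = (\<Sum>x\<in>V. \<Sum>y\<in>V. \<Sum>k<K. \<beta> k * exp (- lam k * t) * (r x y * ext (\<psi> k) (x,y)))"
      using ms tot unfolding total_rate_def by (intro sum.cong refl) (simp add: sum_distrib_left mult_ac)
    also have "\<dots> = (\<Sum>x\<in>V. \<Sum>k<K. \<Sum>y\<in>V. \<beta> k * exp (- lam k * t) * (r x y * ext (\<psi> k) (x,y)))"
      by (intro sum.cong refl) (rule sum.swap)
    also have "\<dots> = (\<Sum>k<K. \<Sum>x\<in>V. \<Sum>y\<in>V. \<beta> k * exp (- lam k * t) * (r x y * ext (\<psi> k) (x,y)))"
      by (rule sum.swap)
    also have "\<dots> = (\<Sum>k<K. \<beta> k * exp (- lam k * t) * (\<Sum>x\<in>V. \<Sum>y\<in>V. r x y * ext (\<psi> k) (x,y)))"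
      by (simp add: sum_distrib_left)
    also have "\<dots> = (\<Sum>k<K. \<beta> k * exp (- lam k * t) * (lam k * \<beta> k / 2))"
      unfolding ext_r using rho by (intro sum.cong refl) simp
    finally show ?thesis unfolding alpha_def N_def by (simp add: power2_eq_square mult_ac)
  qed
  define e where "e k = exp (- lam k * t)" for k
  have key: "2 * t_meet V r * alpha V r t / N = t_meet V r * (\<Sum>k<K. cc k * lam k * e k)"
    unfolding al cc_def e_def using N
    by (simp add: sum_distrib_left sum_divide_distrib power2_eq_square field_simps)
  define c where "c = cc k0"
  define l where "l = lam k0"
  define R where "R = (\<Sum>k\<in>{..<K} - {k0}. cc k / lam k)"
  define T where "T = t_meet V r * (\<Sum>k\<in>{..<K} - {k0}. cc k * lam k * e k)"
  have k0in: "k0 \<in> {..<K}" using k0 by simp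
  have tmR: "t_meet V r = c / l + R"
    unfolding tm R_def c_def l_def using sum.remove[OF finite_lessThan k0in, of "\<lambda>k. cc k / lam k"] by simp
  have split: "2 * t_meet V r * alpha V r t / N = t_meet V r * c * l * exp (- (l * t)) + T"
    unfolding key T_def c_def l_def e_def
    using sum.remove[OF finite_lessThan k0in, of "\<lambda>k. cc k * lam k * exp (- lam k * t)"]
    by (simp add: algebra_simps)
  have rest_cc: "(\<Sum>k\<in>{..<K} - {k0}. cc k) \<le> 1 - c"
    using sum.remove[OF finite_lessThan k0in, of cc] sum_cc_lt unfolding c_def by simp
  have R_nn: "R \<ge> 0" unfolding R_def using cc_nn lam_pos by (intro sum_nonneg) (auto intro: divide_nonneg_pos)
  have "R \<le> (\<Sum>k\<in>{..<K} - {k0}. cc k / gam)"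
    unfolding R_def
  proof (intro sum_mono)
    fix k assume "k \<in> {..<K} - {k0}"
    then have "k < K" "k \<noteq> k0" by auto
    then show "cc k / lam k \<le> cc k / gam" using gap gpos cc_nn lam_pos by (intro divide_left_mono) auto
  qed
  also have "\<dots> = (\<Sum>k\<in>{..<K} - {k0}. cc k) / gam" by (simp add: sum_divide_distrib)
  also have "\<dots> \<le> (1 - c) / gam" using rest_cc gpos by (intro divide_right_mono) auto
  also have "\<dots> \<le> 1 / gam" using cc_nn gpos unfolding c_def by (intro divide_right_mono) auto
  finally have R_le: "R \<le> 1 / gam" .
  have c_nn: "0 \<le> c" unfolding c_def by (rule cc_nn)
  have c_le: "c \<le> 1" using cc_le[OF k0(1)] sum_cc_lt unfolding c_def by simp
  have l_pos: "l > 0" unfolding l_def by (rule lam_pos[OF k0(1)])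
  have tm_pos: "t_meet V r > 0"
  proof -
    obtain k where k: "k < K" "cc k > 0"
    proof (rule ccontr)
      assume "\<not> thesis"
      then have "\<forall>k<K. cc k \<le> 0" using that by force
      then have "(\<Sum>k<K. cc k) \<le> 0" by (intro sum_nonpos) auto
      then show False using sum_cc_pos by simp
    qed
    have "cc k / lam k \<le> (\<Sum>k<K. cc k / lam k)"
      using k cc_nn lam_pos by (intro member_le_sum) (auto intro: divide_nonneg_pos)
    moreover have "cc k / lam k > 0" using k lam_pos by simp
    ultimately show ?thesis using tm by simp
  qed
  have gapc: "1 - c \<le> l / gam"
    using lam_lb[OF k0(1)] gpos unfolding c_def l_def by (simp add: pos_le_divide_eq mult.commute)
  have le1t: "lam k * e k \<le> 1 / t" if "k < K" for k
  proof -
    have lp: "lam k > 0" by (rule lam_pos[OF that])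
    have "exp (lam k * t) \<ge> lam k * t" using exp_ge_add_one_self[of "lam k * t"] by linarith
    then have "lam k * t / exp (lam k * t) \<le> 1" by simp
    then show ?thesis unfolding e_def using t by (simp add: exp_minus field_simps)
  qed
  have T_nn: "T \<ge> 0" unfolding T_def using tm_pos cc_nn lam_pos unfolding e_def
    by (intro mult_nonneg_nonneg sum_nonneg) (auto intro: mult_nonneg_nonneg less_imp_le)
  have "(\<Sum>k\<in>{..<K} - {k0}. cc k * lam k * e k) \<le> (\<Sum>k\<in>{..<K} - {k0}. cc k * (1 / t))"
  proof (intro sum_mono)
    fix k assume "k \<in> {..<K} - {k0}"
    then have k: "k < K" by auto
    show "cc k * lam k * e k \<le> cc k * (1 / t)"
      using mult_left_mono[OF le1t[OF k] cc_nn[of k]] by (simp add: mult.assoc)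
  qed
  also have "\<dots> = (\<Sum>k\<in>{..<K} - {k0}. cc k) / t" by (simp add: sum_divide_distrib)
  also have "\<dots> \<le> (1 - c) / t" using rest_cc t by (intro divide_right_mono) auto
  finally have "T \<le> t_meet V r * ((1 - c) / t)"
    unfolding T_def using tm_pos by (intro mult_left_mono) auto
  then have T_le: "T \<le> t_meet V r * (1 - c) / t" by simp
  show ?thesis
    apply (rule exI[of _ c], rule exI[of _ l], rule exI[of _ T])
    using c_nn c_le l_pos tm_pos tmR R_nn R_le gapc split T_nn T_le unfolding N_def by auto
qed

end


lemma mchainI:
  assumes "transitive_chain V r" "card V \<ge> 2"
  shows "mchain V r"
  using assms unfolding transitive_chain_def markov_rates_def symmetric_rates_def total_rate_def
  by unfold_locales auto

lemma alg:
  fixes c l tm tr \<rho> :: real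
  assumes "c \<ge> 0" "c \<le> 1" "l > 0" "tm > 0" "tr > 0" "c / l \<le> tm" "tm \<le> c / l + tr"
    "1 - c \<le> l * tr" "\<rho> = tr / tm" "\<rho> < 1/2"
  shows "c \<le> l * tm" "l * tm \<le> 1 / (1 - \<rho>)" "1 - \<rho> / (1 - \<rho>) \<le> c"
proof -
  show a: "c \<le> l * tm" using assms(3,6) by (simp add: divide_le_eq mult.commute)
  have "l * tm \<le> c + l * tr" using assms(3,7) by (simp add: field_simps)
  then have "l * tm - l * tr \<le> 1" using assms(2) by linarith
  moreover have "tr = \<rho> * tm" using assms(4,9) by simp
  ultimately have b0: "l * tm * (1 - \<rho>) \<le> 1" by (simp add: algebra_simps)
  have r0: "\<rho> \<ge> 0" using assms(4,5,9) by simp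
  have "1 - \<rho> > 0" using assms(10) by simp
  then show b: "l * tm \<le> 1 / (1 - \<rho>)" using b0 by (simp add: le_divide_eq)
  have "l * tr = (l * tm) * \<rho>" using \<open>tr = \<rho> * tm\<close> by simp
  also have "\<dots> \<le> (1 / (1 - \<rho>)) * \<rho>" using b r0 by (intro mult_right_mono) auto
  finally show "1 - \<rho> / (1 - \<rho>) \<le> c" using assms(8) by simp
qed

theorem proposition7p1:
  fixes r :: "nat \<Rightarrow> nat \<Rightarrow> nat \<Rightarrow> real" and t :: "nat \<Rightarrow> real"
  assumes chains: "\<forall>n\<ge>2. transitive_chain {..<n} (r n)"
    and ratio: "(\<lambda>n. t_rel {..<n} (r n) / t_meet {..<n} (r n)) \<longlonglongrightarrow> 0"
    and tpos: "\<forall>n. t n > 0"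
    and t_lower: "(\<lambda>n. t_rel {..<n} (r n) / t n) \<longlonglongrightarrow> 0"
    and t_upper: "(\<lambda>n. t n / t_meet {..<n} (r n)) \<longlonglongrightarrow> 0"
  shows "(\<lambda>n. 2 * t_meet {..<n} (r n) * alpha {..<n} (r n) (t n) / real n) \<longlonglongrightarrow> 1"
proof -
  define tm where "tm n = t_meet {..<n} (r n)" for n
  define tr where "tr n = t_rel {..<n} (r n)" for n
  define \<rho> where "\<rho> n = tr n / tm n" for n
  have ex: "\<exists>c l T. 0 \<le> c \<and> c \<le> 1 \<and> l > 0 \<and> tm n > 0 \<and> tr n > 0 \<and> c / l \<le> tm n
    \<and> tm n \<le> c / l + tr n \<and> 1 - c \<le> l * tr n
    \<and> 2 * tm n * alpha {..<n} (r n) (t n) / real n = tm n * c * l * exp (- (l * t n)) + T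
    \<and> 0 \<le> T \<and> T \<le> tm n * (1 - c) / t n" if n: "n \<ge> 2" for n
  proof -
    interpret mchain "{..<n}" "r n" using mchainI[of "{..<n}" "r n"] chains n by simp
    have trg: "tr n = 1 / gam" unfolding tr_def t_rel_def gam_def ..
    show ?thesis using chain_bounds[OF tpos[rule_format, of n]] gam_pos unfolding tm_def[symmetric] trg
      by (simp add: divide_inverse)
  qed
  obtain c l T where H: "\<And>n. n \<ge> 2 \<Longrightarrow> 0 \<le> c n \<and> c n \<le> 1 \<and> l n > 0 \<and> tm n > 0 \<and> tr n > 0 \<and> c n / l n \<le> tm n
    \<and> tm n \<le> c n / l n + tr n \<and> 1 - c n \<le> l n * tr n
    \<and> 2 * tm n * alpha {..<n} (r n) (t n) / real n = tm n * c n * l n * exp (- (l n * t n)) + T n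
    \<and> 0 \<le> T n \<and> T n \<le> tm n * (1 - c n) / t n"
    using ex by metis
  have \<rho>0: "\<rho> \<longlonglongrightarrow> 0" using ratio unfolding \<rho>_def tm_def tr_def .
  have ev: "eventually (\<lambda>n. n \<ge> 2 \<and> \<rho> n < 1/2) sequentially"
    using eventually_conj[OF eventually_ge_at_top[of 2] order_tendstoD(2)[OF \<rho>0, of "1/2"]] by simp
  have A: "eventually (\<lambda>n. c n \<le> l n * tm n \<and> l n * tm n \<le> 1 / (1 - \<rho> n) \<and> 1 - \<rho> n / (1 - \<rho> n) \<le> c n
       \<and> c n \<le> 1 \<and> 0 \<le> T n \<and> T n \<le> l n * tm n * (tr n / t n)) sequentially"
    using ev
  proof (rule eventually_mono)
    fix n assume n: "n \<ge> 2 \<and> \<rho> n < 1/2"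
    note h = H[OF conjunct1[OF n]]
    have a: "c n \<le> l n * tm n" "l n * tm n \<le> 1 / (1 - \<rho> n)" "1 - \<rho> n / (1 - \<rho> n) \<le> c n"
      using alg[of "c n" "l n" "tm n" "tr n" "\<rho> n"] h n unfolding \<rho>_def by auto
    have "T n \<le> tm n * (1 - c n) / t n" using h by blast
    also have "\<dots> \<le> tm n * (l n * tr n) / t n"
    proof -
      have "tm n * (1 - c n) \<le> tm n * (l n * tr n)" using h by (intro mult_left_mono) auto
      then show ?thesis using tpos by (intro divide_right_mono) (auto simp: less_imp_le)
    qed
    finally have "T n \<le> l n * tm n * (tr n / t n)" by (simp add: mult_ac)
    then show "c n \<le> l n * tm n \<and> l n * tm n \<le> 1 / (1 - \<rho> n) \<and> 1 - \<rho> n / (1 - \<rho> n) \<le> c n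
       \<and> c n \<le> 1 \<and> 0 \<le> T n \<and> T n \<le> l n * tm n * (tr n / t n)" using a h by auto
  qed
  have lim1: "(\<lambda>n. 1 - \<rho> n / (1 - \<rho> n)) \<longlonglongrightarrow> 1"
    using tendsto_diff[OF tendsto_const[of 1] tendsto_divide[OF \<rho>0 tendsto_diff[OF tendsto_const[of 1] \<rho>0]]] by simp
  have lim2: "(\<lambda>n. 1 / (1 - \<rho> n)) \<longlonglongrightarrow> 1"
    using tendsto_divide[OF tendsto_const[of 1] tendsto_diff[OF tendsto_const[of 1] \<rho>0]] by simp
  have cl: "c \<longlonglongrightarrow> 1"
    by (rule tendsto_sandwich[OF _ _ lim1 tendsto_const[of 1]]) (use A in \<open>auto elim: eventually_mono\<close>)
  have ltm: "(\<lambda>n. l n * tm n) \<longlonglongrightarrow> 1"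
    by (rule tendsto_sandwich[OF _ _ cl lim2]) (use A in \<open>auto elim: eventually_mono\<close>)
  have tt: "(\<lambda>n. t n / tm n) \<longlonglongrightarrow> 0" using t_upper unfolding tm_def .
  have lt: "(\<lambda>n. l n * t n) \<longlonglongrightarrow> 0"
  proof -
    have "(\<lambda>n. (l n * tm n) * (t n / tm n)) \<longlonglongrightarrow> 1 * 0" by (intro tendsto_mult ltm tt)
    moreover have "eventually (\<lambda>n. (l n * tm n) * (t n / tm n) = l n * t n) sequentially"
    proof (rule eventually_mono[OF eventually_ge_at_top[of 2]])
      fix n :: nat assume "2 \<le> n"
      then have "tm n > 0" using H by blast
      then show "(l n * tm n) * (t n / tm n) = l n * t n" by simp
    qed
    ultimately show ?thesis by (simp add: tendsto_cong)
  qed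
  have main: "(\<lambda>n. tm n * c n * l n * exp (- (l n * t n))) \<longlonglongrightarrow> 1"
  proof -
    have "(\<lambda>n. (l n * tm n) * c n * exp (- (l n * t n))) \<longlonglongrightarrow> 1 * 1 * exp (- 0)"
      by (intro tendsto_mult ltm cl tendsto_exp tendsto_minus lt)
    then show ?thesis by (simp add: mult_ac)
  qed
  have trt: "(\<lambda>n. tr n / t n) \<longlonglongrightarrow> 0" using t_lower unfolding tr_def .
  have Tl: "T \<longlonglongrightarrow> 0"
  proof (rule tendsto_sandwich[OF _ _ tendsto_const[of 0]])
    show "(\<lambda>n. l n * tm n * (tr n / t n)) \<longlonglongrightarrow> 0" using tendsto_mult[OF ltm trt] by simp
  qed (use A in \<open>auto elim: eventually_mono\<close>)
  have "(\<lambda>n. tm n * c n * l n * exp (- (l n * t n)) + T n) \<longlonglongrightarrow> 1 + 0" by (intro tendsto_add main Tl)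
  moreover have "eventually (\<lambda>n. tm n * c n * l n * exp (- (l n * t n)) + T n
      = 2 * t_meet {..<n} (r n) * alpha {..<n} (r n) (t n) / real n) sequentially"
  proof (rule eventually_mono[OF eventually_ge_at_top[of 2]])
    fix n :: nat assume "2 \<le> n"
    then show "tm n * c n * l n * exp (- (l n * t n)) + T n
      = 2 * t_meet {..<n} (r n) * alpha {..<n} (r n) (t n) / real n" using H unfolding tm_def by metis
  qed
  ultimately show ?thesis by (simp add: tendsto_cong)
qed


end
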